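(* For any $k\in\mathbb{N}^{d+1}$, any label $\mathfrak l\in\mathfrak L$ and any $\hat F\in\mathcal{D}_{\mathfrak l}\otimes\mathscr{P}$ one has $$\partial^k\hat F=k!\sum_{(\vec q,\vec m)\in I(k)}\Biggl[\prod_{1\le i\le r_{(\vec q,\vec m)}}\ \prod_{(\mathfrak t,p)\in\mathcal E}\frac{1}{m_i[(\mathfrak t,p)]!}\Bigl(\frac{1}{q_i!}\mathfrak X_{(\mathfrak t,p+q_i)}\Bigr)^{m_i[(\mathfrak t,p)]}\Biggr]D^{|\vec m|}\hat F,$$ where $m_i[(\mathfrak t,p)]$ is the $(\mathfrak t,p)$-component of $m_i$, and multiplication by the monomials $\mathfrak X_o$ acts on the $\mathscr P$-factor.
   Context: Fix $d\ge1$, a finite set $\mathfrak L$ of labels, and $\mathcal E=\mathfrak L\times\mathbb{N}^{d+1}$. Let $(\mathfrak X_o)_{o\in\mathcal E}$ be commuting indeterminates and $\mathscr P$ the real algebra of smooth functions of finitely many of them. For $o\in\mathcal E$, $D_o:\mathscr P\to\mathscr P$ is differentiation with respect to $\mathfrak X_o$; for $i\in\{0,\dots,d\}$, with $e_i$ the canonical basis vectors of $\mathbb{R}^{d+1}$, set $\partial_i\mathfrak X_{(\mathfrak t,p)}=\mathfrak X_{(\mathfrak t,p+e_i)}$ and $\partial_iF=\sum_o\partial_i\mathfrak X_o\,D_oF$. For each $\mathfrak l\in\mathfrak L$ a finite subset $\mathcal E_+(\mathfrak l)\subset\mathcal E$ is given, and for a fixed integer $k_\star$, $\mathcal D_{\mathfrak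 l}$ is the commutative unital algebra generated by symbols $\{\mathfrak d_o\}_{o\in\mathcal E_+(\mathfrak l)}$ quotiented by the ideal generated by monomials $\mathfrak d^\alpha$ with $\max_o\alpha_o>k_\star$. On $\mathcal D_{\mathfrak l}$ set $D_o\mathfrak d=\mathfrak d_o\cdot\mathfrak d$ if $o\in\mathcal E_+(\mathfrak l)$ and $D_o\mathfrak d=0$ otherwise; extend to $\mathcal D_{\mathfrak l}\otimes\mathscr P$ by $D_o(\mathfrak d\otimes F)=\mathfrak d\otimes D_oF+D_o\mathfrak d\otimes F$ and set $\partial_i(\mathfrak d\otimes F)=\mathfrak d\otimes\partial_iF+\sum_{o\in\mathcal E}D_o\mathfrak d\otimes F\,\partial_i\mathfrak X_o$. Write $\partial^k=\prod_i\partial_i^{k_i}$ and, for $m\in\mathbb N^{\mathcal E}$ (finitely supported), $D^m=\prod_oD_o^{m[o]}$. Using the lexicographic order on $\mathbb N^{d+1}$, let $I(r,k)$ be the set of pairs $(\vec q,\vec m)\in(\mathbb N^{d+1})^r\times(\mathbb N^{\mathcal E}\setminus\{0\})^r$ with $0<q_1<\dots<q_r$ and $\sum_{i=1}^r|m_i|\,q_i=k$, and $I(k)=\bigsqcup_{r\ge0}I(r,k)$; for $(\vec q,\vec m)\in I(r,k)$ write $r_{(\vec q,\vec m)}=r$ and $|\vec m|=\sum_im_i$. *)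

theory Defs
  imports "HOL-Analysis.Analysis" "HOL-Library.Groups_Big_Fun"
begin

text \<open>Indices o = (label, p) with p a multi-index; in E exactly when p has length d+1.
  Elements of P are real functions of an assignment of reals to all indeterminates;
  an element of D_l tensor P is given by its P-coefficients on the monomial basis
  (exponent vectors alpha with support in E_+(l) and all exponents at most kstar).\<close>

type_synonym 'l idx = "'l \<times> nat list"
type_synonym 'l asg = "'l idx \<Rightarrow> real"
type_synonym 'l pfun = "'l asg \<Rightarrow> real"
type_synonym 'l mon = "'l idx \<Rightarrow> nat"
type_synonym 'l tens = "'l mon \<Rightarrow> 'l pfun"

definition Eset :: "nat \<Rightarrow> 'l idx set" where
  "Eset d = {e. length (snd e) = d + 1}"

definition pD :: "'l idx \<Rightarrow> 'l pfun \<Rightarrow> 'l pfun" where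
  "pD e F = (\<lambda>x. deriv (\<lambda>t. F (x(e := t))) (x e))"

fun pDs :: "'l idx list \<Rightarrow> 'l pfun \<Rightarrow> 'l pfun" where
  "pDs [] F = F"
| "pDs (e # es) F = pD e (pDs es F)"

definition smooth_fin :: "nat \<Rightarrow> 'l pfun \<Rightarrow> bool" where
  "smooth_fin d F \<longleftrightarrow>
     (\<exists>S. finite S \<and> S \<subseteq> Eset d \<and> (\<forall>x y. (\<forall>e\<in>S. x e = y e) \<longrightarrow> F x = F y)) \<and>
     (\<forall>es. continuous_on UNIV (pDs es F) \<and>
           (\<forall>x e. (\<lambda>t. pDs es F (x(e := t))) differentiable (at (x e))))"

definition shift_i :: "nat \<Rightarrow> 'l idx \<Rightarrow> 'l idx" where
  "shift_i i e = (fst e, (snd e)[i := snd e ! i + 1])"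

definition vadd :: "nat list \<Rightarrow> nat list \<Rightarrow> nat list" where
  "vadd p q = map2 (+) p q"

definition shift_q :: "nat list \<Rightarrow> 'l idx \<Rightarrow> 'l idx" where
  "shift_q q e = (fst e, vadd (snd e) q)"

definition vfact :: "nat list \<Rightarrow> real" where
  "vfact q = (\<Prod>j<length q. fact (q ! j))"

text \<open>partial_i on P: sum over o of (partial_i X_o) * D_o F.\<close>
definition dP :: "nat \<Rightarrow> 'l pfun \<Rightarrow> 'l pfun" where
  "dP i F = (\<lambda>x. Sum_any (\<lambda>e. x (shift_i i e) * pD e F x))"

definition valid_mon :: "('l \<Rightarrow> 'l idx set) \<Rightarrow> nat \<Rightarrow> 'l \<Rightarrow> 'l mon \<Rightarrow> bool" where
  "valid_mon Ep ks l \<alpha> \<longleftrightarrow> (\<forall>e. \<alpha> e \<noteq> 0 \<longrightarrow> e \<in> Ep l) \<and> (\<forall>e. \<alpha> e \<le> ks)"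

definition in_tens :: "nat \<Rightarrow> ('l \<Rightarrow> 'l idx set) \<Rightarrow> nat \<Rightarrow> 'l \<Rightarrow> 'l tens \<Rightarrow> bool" where
  "in_tens d Ep ks l Fh \<longleftrightarrow>
     (\<forall>\<alpha>. valid_mon Ep ks l \<alpha> \<longrightarrow> smooth_fin d (Fh \<alpha>)) \<and>
     (\<forall>\<alpha>. \<not> valid_mon Ep ks l \<alpha> \<longrightarrow> Fh \<alpha> = (\<lambda>_. 0))"

text \<open>D_o on D_l tensor P: D_o(d^beta (x) F) = d^beta (x) D_o F + d_o d^beta (x) F.\<close>
definition tD :: "('l \<Rightarrow> 'l idx set) \<Rightarrow> nat \<Rightarrow> 'l \<Rightarrow> 'l idx \<Rightarrow> 'l tens \<Rightarrow> 'l tens" where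
  "tD Ep ks l e Fh = (\<lambda>\<alpha>. if valid_mon Ep ks l \<alpha> then
      (\<lambda>x. pD e (Fh \<alpha>) x + (if e \<in> Ep l \<and> 1 \<le> \<alpha> e then Fh (\<alpha>(e := \<alpha> e - 1)) x else 0))
    else (\<lambda>_. 0))"

text \<open>partial_i on D_l tensor P: d (x) partial_i F + sum_o D_o d (x) F * partial_i X_o.\<close>
definition tdi :: "('l \<Rightarrow> 'l idx set) \<Rightarrow> nat \<Rightarrow> 'l \<Rightarrow> nat \<Rightarrow> 'l tens \<Rightarrow> 'l tens" where
  "tdi Ep ks l i Fh = (\<lambda>\<alpha>. if valid_mon Ep ks l \<alpha> then
      (\<lambda>x. dP i (Fh \<alpha>) x +
           (\<Sum>e\<in>{e\<in>Ep l. 1 \<le> \<alpha> e}. Fh (\<alpha>(e := \<alpha> e - 1)) x * x (shift_i i e)))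
    else (\<lambda>_. 0))"

definition tdk :: "('l \<Rightarrow> 'l idx set) \<Rightarrow> nat \<Rightarrow> 'l \<Rightarrow> nat list \<Rightarrow> 'l tens \<Rightarrow> 'l tens" where
  "tdk Ep ks l k = foldr (\<lambda>i G. (tdi Ep ks l i ^^ (k ! i)) \<circ> G) [0..<length k] id"

text \<open>D^m = prod_o D_o^(m[o]) (the D_o commute; an arbitrary enumeration of the support is used).\<close>
definition tDm :: "('l \<Rightarrow> 'l idx set) \<Rightarrow> nat \<Rightarrow> 'l \<Rightarrow> 'l mon \<Rightarrow> 'l tens \<Rightarrow> 'l tens" where
  "tDm Ep ks l m = (let es = (SOME es. distinct es \<and> set es = {e. m e \<noteq> 0})
                    in foldr (\<lambda>e G. (tD Ep ks l e ^^ m e) \<circ> G) es id)"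

definition lexless :: "nat list \<Rightarrow> nat list \<Rightarrow> bool" where
  "lexless p q \<longleftrightarrow> length p = length q \<and>
     (\<exists>j<length p. take j p = take j q \<and> p ! j < q ! j)"

definition msize :: "'l mon \<Rightarrow> nat" where
  "msize m = Sum_any m"

definition msum :: "'l mon list \<Rightarrow> 'l mon" where
  "msum ms = (\<lambda>e. \<Sum>m\<leftarrow>ms. m e)"

definition Iset :: "nat \<Rightarrow> nat list \<Rightarrow> (nat list list \<times> 'l mon list) set" where
  "Iset d k = {(qs, ms). length qs = length ms \<and>
      (\<forall>q\<in>set qs. length q = d + 1 \<and> lexless (replicate (d + 1) 0) q) \<and>
      sorted_wrt lexless qs \<and>
      (\<forall>m\<in>set ms. finite {e. m e \<noteq> 0} \<and> {e. m e \<noteq> 0} \<subseteq> Eset d \<and> m \<noteq> (\<lambda>_. 0)) \<and>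
      (\<forall>j\<le>d. (\<Sum>i<length qs. msize (ms ! i) * (qs ! i) ! j) = k ! j)}"

definition coef :: "nat list list \<Rightarrow> 'l mon list \<Rightarrow> 'l pfun" where
  "coef qs ms = (\<lambda>x. \<Prod>i<length qs. \<Prod>e\<in>{e. (ms ! i) e \<noteq> 0}.
       (1 / fact ((ms ! i) e)) * ((1 / vfact (qs ! i)) * x (shift_q (qs ! i) e)) ^ ((ms ! i) e))"

end

theory Submission
  imports Defs "HOL-Library.Multiset" "HOL-Library.List_Lexorder"
begin

definition pdiff :: "'l idx \<Rightarrow> 'l pfun \<Rightarrow> bool" where
  "pdiff e F \<longleftrightarrow> (\<forall>x. (\<lambda>t. F (x(e := t))) differentiable (at (x e)))"

definition PP :: "'l pfun \<Rightarrow> bool" where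
  "PP F \<longleftrightarrow> continuous_on UNIV F \<and> (\<forall>e. pdiff e F)"

definition Sm :: "'l pfun \<Rightarrow> bool" where
  "Sm F \<longleftrightarrow> (\<forall>es. PP (pDs es F))"

definition dep :: "'l idx set \<Rightarrow> 'l pfun \<Rightarrow> bool" where
  "dep S F \<longleftrightarrow> (\<forall>x y. (\<forall>e\<in>S. x e = y e) \<longrightarrow> F x = F y)"

lemma pD_has:
  assumes "pdiff e F"
  shows "((\<lambda>t. F (x(e := t))) has_real_derivative pD e F (x(e := s))) (at s)"
proof -
  have "(\<lambda>t. F ((x(e := s))(e := t))) differentiable (at ((x(e := s)) e))"
    using assms unfolding pdiff_def by blast
  then have "(\<lambda>t. F (x(e := t))) differentiable (at s)" by simp
  then show ?thesis unfolding pD_def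
    by (simp add: DERIV_deriv_iff_real_differentiable[symmetric])
qed

lemma pD_has0:
  assumes "pdiff e F"
  shows "((\<lambda>t. F (x(e := t))) has_real_derivative pD e F x) (at (x e))"
  using pD_has[OF assms, of x "x e"] by simp

lemma pdiffI:
  assumes "\<And>x. \<exists>D. ((\<lambda>t. F (x(e := t))) has_real_derivative D) (at (x e))"
  shows "pdiff e F"
  unfolding pdiff_def using assms real_differentiable_def by blast

lemma pDs_append: "pDs (es @ fs) F = pDs es (pDs fs F)"
  by (induction es) auto

lemma Sm_pD: "Sm F \<Longrightarrow> Sm (pD e F)"
  unfolding Sm_def by (metis pDs.simps pDs_append append_Cons append_Nil)

lemma Sm_PP: "Sm F \<Longrightarrow> PP F"
  unfolding Sm_def by (metis pDs.simps(1))

lemma Sm_pdiff: "Sm F \<Longrightarrow> pdiff e F"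
  using Sm_PP PP_def by blast

lemma Sm_cont: "Sm F \<Longrightarrow> continuous_on UNIV F"
  using Sm_PP PP_def by blast

lemma Sm_coind:
  assumes "\<And>F. A F \<Longrightarrow> PP F \<and> (\<forall>e. A (pD e F))" and "A F"
  shows "Sm F"
proof -
  have "A (pDs es F)" for es
    by (induction es) (use assms in auto)
  then show ?thesis unfolding Sm_def using assms(1) by blast
qed

lemma pD_add:
  assumes "pdiff e F" "pdiff e G"
  shows "pD e (\<lambda>x. F x + G x) = (\<lambda>x. pD e F x + pD e G x)"
proof
  fix x
  have "((\<lambda>t. F (x(e := t)) + G (x(e := t))) has_real_derivative pD e F x + pD e G x) (at (x e))"
    by (intro DERIV_add pD_has0 assms)
  then show "pD e (\<lambda>x. F x + G x) x = pD e F x + pD e G x"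
    unfolding pD_def[of e "\<lambda>x. F x + G x"] by (rule DERIV_imp_deriv)
qed

lemma pdiff_add: "pdiff e F \<Longrightarrow> pdiff e G \<Longrightarrow> pdiff e (\<lambda>x. F x + G x)"
  by (rule pdiffI) (use DERIV_add pD_has0 in blast)

lemma pD_mult:
  assumes "pdiff e F" "pdiff e G"
  shows "pD e (\<lambda>x. F x * G x) = (\<lambda>x. pD e F x * G x + F x * pD e G x)"
proof
  fix x
  have "((\<lambda>t. F (x(e := t)) * G (x(e := t))) has_real_derivative pD e F x * G x + F x * pD e G x) (at (x e))"
    using DERIV_mult[OF pD_has0[OF assms(1), of x] pD_has0[OF assms(2), of x]] by (simp add: mult.commute)
  then show "pD e (\<lambda>x. F x * G x) x = pD e F x * G x + F x * pD e G x"
    unfolding pD_def[of e "\<lambda>x. F x * G x"] by (simp add: DERIV_imp_deriv)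
qed

lemma pdiff_mult: "pdiff e F \<Longrightarrow> pdiff e G \<Longrightarrow> pdiff e (\<lambda>x. F x * G x)"
  by (rule pdiffI) (use DERIV_mult pD_has0 in blast)

lemma pD_const: "pD e (\<lambda>x. c) = (\<lambda>x. 0)"
  unfolding pD_def by simp

lemma pdiff_const: "pdiff e (\<lambda>x. c)"
  by (rule pdiffI) (use DERIV_const in blast)

lemma pD_coord: "pD e (\<lambda>x. x c) = (\<lambda>x. if c = e then 1 else 0)"
proof
  fix x
  show "pD e (\<lambda>x. x c) x = (if c = e then 1 else 0)"
  proof (cases "c = e")
    case True
    then show ?thesis unfolding pD_def by simp
  next
    case False
    then show ?thesis unfolding pD_def by simp
  qed
qed

lemma pdiff_coord: "pdiff e (\<lambda>x. x c)"
proof (rule pdiffI)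
  fix x :: "'a asg"
  show "\<exists>D. ((\<lambda>t. (x(e := t)) c) has_real_derivative D) (at (x e))"
  proof (cases "c = e")
    case True
    have "((\<lambda>t. (x(e := t)) c) has_real_derivative 1) (at (x e))"
      using True by (simp add: DERIV_ident)
    then show ?thesis by blast
  next
    case False
    have "((\<lambda>t. (x(e := t)) c) has_real_derivative 0) (at (x e))"
      using False by simp
    then show ?thesis by blast
  qed
qed

lemma pDs_const: "pDs es (\<lambda>x. c) = (\<lambda>x. if es = [] then c else 0)"
  by (induction es) (auto simp: pD_const)

lemma Sm_const: "Sm (\<lambda>x. c)"
  unfolding Sm_def PP_def by (auto simp: pDs_const pdiff_const)

lemma Sm_coind':
  assumes "\<And>F. A F \<Longrightarrow> PP F" "\<And>F e. A F \<Longrightarrow> A (pD e F)" "A F"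
  shows "Sm F"
  using Sm_coind[of A F] assms by blast

lemma Sm_coord: "Sm (\<lambda>x. x c)"
proof (rule Sm_coind'[where A="\<lambda>F. F = (\<lambda>x. x c) \<or> (\<exists>r. F = (\<lambda>x. r))"])
  fix F :: "'a pfun" and e assume "F = (\<lambda>x. x c) \<or> (\<exists>r. F = (\<lambda>x. r))"
  then show "pD e F = (\<lambda>x. x c) \<or> (\<exists>r. pD e F = (\<lambda>x. r))"
    by (auto simp: pD_const pD_coord)
next
  fix F :: "'a pfun" assume "F = (\<lambda>x. x c) \<or> (\<exists>r. F = (\<lambda>x. r))"
  then show "PP F"
    by (auto simp: PP_def pdiff_const pdiff_coord)
qed simp

lemma Sm_add: assumes "Sm F" "Sm G" shows "Sm (\<lambda>x. F x + G x)"
proof -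
  let ?A = "\<lambda>H. \<exists>F G. Sm F \<and> Sm G \<and> H = (\<lambda>x. F x + G x)"
  have 1: "PP H" if "?A H" for H
    using that unfolding PP_def
    by (auto intro!: pdiff_add continuous_on_add intro: Sm_cont Sm_pdiff)
  have 2: "?A (pD e H)" if "?A H" for H e
  proof -
    obtain F G where FG: "Sm F" "Sm G" "H = (\<lambda>x. F x + G x)" using \<open>?A H\<close> by blast
    have "pD e H = (\<lambda>x. pD e F x + pD e G x)"
      unfolding FG(3) by (intro pD_add Sm_pdiff FG)
    then show ?thesis using FG Sm_pD by blast
  qed
  show ?thesis by (rule Sm_coind'[of ?A, OF 1 2]) (use assms in blast)+
qed

definition sprod :: "('a pfun \<times> 'a pfun) list \<Rightarrow> 'a pfun" where
  "sprod L = (\<lambda>x. \<Sum>p\<leftarrow>L. fst p x * snd p x)"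

lemma pD_sprod:
  assumes "\<forall>p\<in>set L. Sm (fst p) \<and> Sm (snd p)"
  shows "pdiff e (sprod L) \<and> pD e (sprod L) = sprod (map (\<lambda>p. (pD e (fst p), snd p)) L @ map (\<lambda>p. (fst p, pD e (snd p))) L)"
  using assms
proof (induction L)
  case Nil
  then show ?case by (simp add: sprod_def pdiff_const pD_const)
next
  case (Cons p L)
  have s: "sprod (p # L) = (\<lambda>x. fst p x * snd p x + sprod L x)" by (simp add: sprod_def)
  have dp: "pdiff e (\<lambda>x. fst p x * snd p x)" using Cons.prems by (intro pdiff_mult Sm_pdiff) auto
  have "pD e (sprod (p # L)) = (\<lambda>x. pD e (\<lambda>x. fst p x * snd p x) x + pD e (sprod L) x)"
    unfolding s using Cons dp by (intro pD_add) auto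
  also have "\<dots> = sprod (map (\<lambda>p. (pD e (fst p), snd p)) (p#L) @ map (\<lambda>p. (fst p, pD e (snd p))) (p#L))"
    using Cons by (simp add: pD_mult Sm_pdiff sprod_def add_ac)
  moreover have "pdiff e (\<lambda>x. fst p x * snd p x + sprod L x)"
    by (rule pdiff_add[OF dp]) (use Cons in auto)
  ultimately show ?case using s by auto
qed

lemma cont_sprod:
  assumes "\<forall>p\<in>set L. Sm (fst p) \<and> Sm (snd p)"
  shows "continuous_on UNIV (sprod L)"
  using assms
proof (induction L)
  case Nil
  then show ?case by (simp add: sprod_def)
next
  case (Cons p L)
  have s: "sprod (p # L) = (\<lambda>x. fst p x * snd p x + sprod L x)" by (simp add: sprod_def)
  show ?case unfolding s using Cons
    by (intro continuous_on_add continuous_on_mult Sm_cont[of "fst p"] Sm_cont[of "snd p"]) auto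
qed

lemma Sm_mult: assumes "Sm F" "Sm G" shows "Sm (\<lambda>x. F x * G x)"
proof -
  let ?A = "\<lambda>H. \<exists>L. (\<forall>p\<in>set L. Sm (fst p) \<and> Sm (snd p)) \<and> H = sprod L"
  have 1: "PP H" if "?A H" for H
    using that pD_sprod cont_sprod unfolding PP_def by blast
  have 2: "?A (pD e H)" if "?A H" for H e
  proof -
    from that obtain L where L: "\<forall>p\<in>set L. Sm (fst p) \<and> Sm (snd p)" "H = sprod L" by blast
    have "\<forall>p\<in>set (map (\<lambda>p. (pD e (fst p), snd p)) L @ map (\<lambda>p. (fst p, pD e (snd p))) L). Sm (fst p) \<and> Sm (snd p)"
      using L(1) by (auto intro!: Sm_pD)
    then show ?thesis unfolding L(2) using pD_sprod[OF L(1)]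
      by (intro exI[of _ "map (\<lambda>p. (pD e (fst p), snd p)) L @ map (\<lambda>p. (fst p, pD e (snd p))) L"]) auto
  qed
  have "?A (\<lambda>x. F x * G x)"
    using assms by (intro exI[of _ "[(F, G)]"]) (auto simp: sprod_def)
  then show ?thesis using Sm_coind'[of ?A, OF 1 2] by blast
qed

lemma Sm_sum: "finite I \<Longrightarrow> (\<And>i. i \<in> I \<Longrightarrow> Sm (f i)) \<Longrightarrow> Sm (\<lambda>x. \<Sum>i\<in>I. f i x)"
  by (induction I rule: finite_induct) (auto intro: Sm_add Sm_const)

lemma Sm_prod: "finite I \<Longrightarrow> (\<And>i. i \<in> I \<Longrightarrow> Sm (f i)) \<Longrightarrow> Sm (\<lambda>x. \<Prod>i\<in>I. f i x)"
  by (induction I rule: finite_induct) (auto intro: Sm_mult Sm_const)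

lemma Sm_power: "Sm F \<Longrightarrow> Sm (\<lambda>x. F x ^ n)"
  by (induction n) (auto intro: Sm_mult Sm_const)

lemma pdiff_sum: "finite I \<Longrightarrow> (\<And>i. i \<in> I \<Longrightarrow> pdiff e (f i)) \<Longrightarrow> pdiff e (\<lambda>x. \<Sum>i\<in>I. f i x)"
  by (induction I rule: finite_induct) (auto intro: pdiff_add pdiff_const)

lemma pD_sum: "finite I \<Longrightarrow> (\<And>i. i \<in> I \<Longrightarrow> pdiff e (f i)) \<Longrightarrow>
   pD e (\<lambda>x. \<Sum>i\<in>I. f i x) = (\<lambda>x. \<Sum>i\<in>I. pD e (f i) x)"
proof (induction I rule: finite_induct)
  case empty
  then show ?case by (simp add: pD_const)
next
  case (insert i I)
  then show ?case by (simp add: pD_add pdiff_sum)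
qed

lemma dep_pD: "dep S F \<Longrightarrow> dep S (pD e F)"
  unfolding dep_def pD_def
proof (intro allI impI)
  fix x y :: "'a asg"
  assume H: "\<forall>x y. (\<forall>e\<in>S. x e = y e) \<longrightarrow> F x = F y" and xy: "\<forall>e\<in>S. x e = y e"
  show "deriv (\<lambda>t. F (x(e := t))) (x e) = deriv (\<lambda>t. F (y(e := t))) (y e)"
  proof (cases "e \<in> S")
    case True
    then have "(\<lambda>t. F (x(e := t))) = (\<lambda>t. F (y(e := t)))" using H xy by auto
    then show ?thesis using True xy by simp
  next
    case False
    then have "(\<lambda>t. F (x(e := t))) = (\<lambda>t. F x)" "(\<lambda>t. F (y(e := t))) = (\<lambda>t. F y)"
      using H by auto
    then show ?thesis by simp
  qed
qed

lemma pD_nodep: "dep S F \<Longrightarrow> e \<notin> S \<Longrightarrow> pD e F = (\<lambda>x. 0)"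
proof
  fix x assume "dep S F" "e \<notin> S"
  then have "(\<lambda>t. F (x(e := t))) = (\<lambda>t. F x)" unfolding dep_def by auto
  then show "pD e F x = 0" unfolding pD_def by simp
qed

lemma dep_mono: "dep S F \<Longrightarrow> S \<subseteq> T \<Longrightarrow> dep T F"
  unfolding dep_def by blast

lemma cont_c2:
  "continuous_on UNIV (\<lambda>p::real \<times> real. x(a := fst p, b := snd p))"
proof (rule continuous_on_coordinatewise_then_product)
  fix i
  show "continuous_on UNIV (\<lambda>p::real \<times> real. (x(a := fst p, b := snd p)) i)"
  proof (cases "i = b")
    case True
    then show ?thesis by (simp add: continuous_on_snd continuous_on_id)
  next
    case False
    then show ?thesis by (cases "i = a") (auto intro: continuous_intros)
  qed
qed

lemma cont_near:
  fixes G :: "'l pfun"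
  assumes "continuous_on UNIV G" "e > 0"
  shows "\<exists>\<delta>>0. \<forall>s t. \<bar>s - x a\<bar> < \<delta> \<longrightarrow> \<bar>t - x b\<bar> < \<delta> \<longrightarrow> \<bar>G (x(a := s, b := t)) - G x\<bar> < e"
proof -
  let ?f = "\<lambda>p::real \<times> real. G (x(a := fst p, b := snd p))"
  have "continuous_on UNIV ?f"
    by (rule continuous_on_compose2[OF assms(1) cont_c2]) auto
  then have "isCont ?f (x a, x b)"
    using continuous_on_eq_continuous_at by blast
  then obtain d where d: "d > 0" "\<forall>p. dist p (x a, x b) < d \<longrightarrow> dist (?f p) (?f (x a, x b)) < e"
    using assms(2) unfolding continuous_at_eps_delta by blast
  show ?thesis
  proof (intro exI[of _ "d / 2"] conjI allI impI)
    fix s t assume st: "\<bar>s - x a\<bar> < d / 2" "\<bar>t - x b\<bar> < d / 2"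
    have "dist (s, t) (x a, x b) \<le> \<bar>s - x a\<bar> + \<bar>t - x b\<bar>"
      unfolding dist_Pair_Pair dist_real_def using sqrt_sum_squares_le_sum_abs[of "s - x a" "t - x b"] by simp
    then have "dist (s, t) (x a, x b) < d" using st by linarith
    then have "dist (?f (s, t)) (?f (x a, x b)) < e" using d by blast
    then show "\<bar>G (x(a := s, b := t)) - G x\<bar> < e" by (simp add: dist_real_def)
  qed (use d in auto)
qed

lemma clairaut_pt:
  assumes "Sm F"
  shows "pD a (pD b F) x = pD b (pD a F) x"
proof (cases "a = b")
  case True
  then show ?thesis by simp
next
  case False
  define s0 where "s0 = x a"
  define t0 where "t0 = x b"
  define c where "c = (\<lambda>s t. x(a := s, b := t))"
  have xc: "c s0 t0 = x" unfolding c_def s0_def t0_def by simp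
  have tw: "(x(b := t))(a := u) = c u t" for u t
    unfolding c_def using False by (simp add: fun_upd_twist)
  have tw2: "(x(a := s))(b := v) = c s v" for s v
    unfolding c_def by simp
  have dA: "((\<lambda>u. G (c u t)) has_real_derivative pD a G (c s t)) (at s)" if "pdiff a G" for G s t
    using pD_has[OF that, of "x(b := t)" s] unfolding tw .
  have dB: "((\<lambda>v. G (c s v)) has_real_derivative pD b G (c s t)) (at t)" if "pdiff b G" for G s t
    using pD_has[OF that, of "x(a := s)" t] unfolding tw2 .
  have pa: "pdiff a G" "pdiff b G" if "Sm G" for G using that Sm_pdiff by blast+
  have SmA: "Sm (pD a F)" and SmB: "Sm (pD b F)" using assms Sm_pD by blast+
  have near: "\<exists>\<delta>>0. \<forall>s t. \<bar>s - s0\<bar> < \<delta> \<longrightarrow> \<bar>t - t0\<bar> < \<delta> \<longrightarrow> \<bar>G (c s t) - G x\<bar> < e"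
    if "Sm G" "e > 0" for G e
    using cont_near[OF Sm_cont[OF that(1)] that(2), of x a b] unfolding c_def s0_def t0_def .
  let ?Fab = "pD a (pD b F)" and ?Fba = "pD b (pD a F)"
  have key: "\<bar>?Fab x - ?Fba x\<bar> < 2 * e" if e: "e > 0" for e
  proof -
    obtain d1 where d1: "d1 > 0" "\<forall>s t. \<bar>s - s0\<bar> < d1 \<longrightarrow> \<bar>t - t0\<bar> < d1 \<longrightarrow> \<bar>?Fba (c s t) - ?Fba x\<bar> < e"
      using near[OF Sm_pD[OF SmA] e] by blast
    obtain d2 where d2: "d2 > 0" "\<forall>s t. \<bar>s - s0\<bar> < d2 \<longrightarrow> \<bar>t - t0\<bar> < d2 \<longrightarrow> \<bar>?Fab (c s t) - ?Fab x\<bar> < e"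
      using near[OF Sm_pD[OF SmB] e] by blast
    define h where "h = min d1 d2 / 2"
    have h: "h > 0" "h < d1" "h < d2" unfolding h_def using d1 d2 by auto
    define D where "D = F (c (s0 + h) (t0 + h)) - F (c (s0 + h) t0) - F (c s0 (t0 + h)) + F (c s0 t0)"
    obtain \<xi> where \<xi>: "s0 < \<xi>" "\<xi> < s0 + h"
      "(F (c (s0 + h) (t0 + h)) - F (c (s0 + h) t0)) - (F (c s0 (t0 + h)) - F (c s0 t0)) =
        (s0 + h - s0) * (pD a F (c \<xi> (t0 + h)) - pD a F (c \<xi> t0))"
    proof -
      have "\<And>u. ((\<lambda>u. F (c u (t0 + h)) - F (c u t0)) has_real_derivative pD a F (c u (t0 + h)) - pD a F (c u t0)) (at u)"
        using dA[OF pa(1)[OF assms]] by (intro DERIV_diff)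
      then show ?thesis using MVT2[of s0 "s0 + h" "\<lambda>u. F (c u (t0 + h)) - F (c u t0)" "\<lambda>u. pD a F (c u (t0 + h)) - pD a F (c u t0)"]
        h(1) that by auto
    qed
    obtain \<eta> where \<eta>: "t0 < \<eta>" "\<eta> < t0 + h"
      "pD a F (c \<xi> (t0 + h)) - pD a F (c \<xi> t0) = (t0 + h - t0) * ?Fba (c \<xi> \<eta>)"
      using MVT2[of t0 "t0 + h" "\<lambda>v. pD a F (c \<xi> v)" "\<lambda>v. ?Fba (c \<xi> v)"]
        h(1) dB[OF pa(2)[OF SmA]] by auto
    obtain \<eta>' where \<eta>': "t0 < \<eta>'" "\<eta>' < t0 + h"
      "(F (c (s0 + h) (t0 + h)) - F (c s0 (t0 + h))) - (F (c (s0 + h) t0) - F (c s0 t0)) =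
        (t0 + h - t0) * (pD b F (c (s0 + h) \<eta>') - pD b F (c s0 \<eta>'))"
    proof -
      have "\<And>v. ((\<lambda>v. F (c (s0 + h) v) - F (c s0 v)) has_real_derivative pD b F (c (s0 + h) v) - pD b F (c s0 v)) (at v)"
        using dB[OF pa(2)[OF assms]] by (intro DERIV_diff)
      then show ?thesis using MVT2[of t0 "t0 + h" "\<lambda>v. F (c (s0 + h) v) - F (c s0 v)" "\<lambda>v. pD b F (c (s0 + h) v) - pD b F (c s0 v)"]
        h(1) that by auto
    qed
    obtain \<xi>' where \<xi>': "s0 < \<xi>'" "\<xi>' < s0 + h"
      "pD b F (c (s0 + h) \<eta>') - pD b F (c s0 \<eta>') = (s0 + h - s0) * ?Fab (c \<xi>' \<eta>')"
      using MVT2[of s0 "s0 + h" "\<lambda>u. pD b F (c u \<eta>')" "\<lambda>u. ?Fab (c u \<eta>')"]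
        h(1) dA[OF pa(1)[OF SmB]] by auto
    have "h * (h * ?Fba (c \<xi> \<eta>)) = h * (h * ?Fab (c \<xi>' \<eta>'))"
      using \<xi>(3) \<eta>(3) \<eta>'(3) \<xi>'(3) by (simp add: algebra_simps)
    then have eq: "?Fba (c \<xi> \<eta>) = ?Fab (c \<xi>' \<eta>')" using h(1) by simp
    have "\<bar>?Fba (c \<xi> \<eta>) - ?Fba x\<bar> < e" using d1(2) \<xi> \<eta> h by auto
    moreover have "\<bar>?Fab (c \<xi>' \<eta>') - ?Fab x\<bar> < e" using d2(2) \<xi>' \<eta>' h by auto
    ultimately show ?thesis using eq by linarith
  qed
  show ?thesis
  proof (rule ccontr)
    assume "?Fab x \<noteq> ?Fba x"
    then have "\<bar>?Fab x - ?Fba x\<bar> / 2 > 0" by simp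
    from key[OF this] show False by simp
  qed
qed

lemma clairaut: "Sm F \<Longrightarrow> pD a (pD b F) = pD b (pD a F)"
  using clairaut_pt by blast

locale TS =
  fixes Ep :: "'l \<Rightarrow> 'l idx set" and ks :: nat and l :: 'l
begin

abbreviation V where "V \<equiv> valid_mon Ep ks l"
abbreviation TD where "TD \<equiv> tD Ep ks l"

definition GT :: "'l idx set \<Rightarrow> 'l tens \<Rightarrow> bool" where
  "GT S H \<longleftrightarrow> (\<forall>\<alpha>. \<not> V \<alpha> \<longrightarrow> H \<alpha> = (\<lambda>_. 0)) \<and> (\<forall>\<alpha>. Sm (H \<alpha>)) \<and> (\<forall>\<alpha>. dep S (H \<alpha>))"

lemma V_dec: assumes "V \<alpha>" shows "V (\<alpha>(e := \<alpha> e - 1))"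
  unfolding valid_mon_def
proof (intro conjI allI impI)
  have a: "\<forall>e. \<alpha> e \<le> ks" "\<forall>e. \<alpha> e \<noteq> 0 \<longrightarrow> e \<in> Ep l"
    using assms unfolding valid_mon_def by blast+
  fix e' show "(\<alpha>(e := \<alpha> e - 1)) e' \<le> ks"
    by (metis a(1) diff_le_self fun_upd_apply le_trans)
next
  have a: "\<forall>e. \<alpha> e \<le> ks" "\<forall>e. \<alpha> e \<noteq> 0 \<longrightarrow> e \<in> Ep l"
    using assms unfolding valid_mon_def by blast+
  fix e' assume "(\<alpha>(e := \<alpha> e - 1)) e' \<noteq> 0"
  then show "e' \<in> Ep l"
    by (metis a(2) diff_0_eq_0 fun_upd_apply)
qed

lemma GT_mono: "GT S H \<Longrightarrow> S \<subseteq> T \<Longrightarrow> GT T H"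
  unfolding GT_def using dep_mono by blast

lemma dep_add: "dep S F \<Longrightarrow> dep S G \<Longrightarrow> dep S (\<lambda>x. F x + G x)"
  unfolding dep_def by metis

lemma dep_mult: "dep S F \<Longrightarrow> dep T G \<Longrightarrow> dep (S \<union> T) (\<lambda>x. F x * G x)"
  unfolding dep_def by (metis Un_iff)

lemma dep_const: "dep S (\<lambda>x. c)"
  unfolding dep_def by auto

lemma tD_valid: "V \<alpha> \<Longrightarrow> TD e H \<alpha> = (\<lambda>x. pD e (H \<alpha>) x +
     (if e \<in> Ep l \<and> 1 \<le> \<alpha> e then H (\<alpha>(e := \<alpha> e - 1)) x else 0))"
  unfolding tD_def by simp

lemma tD_invalid: "\<not> V \<alpha> \<Longrightarrow> TD e H \<alpha> = (\<lambda>x. 0)"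
  unfolding tD_def by simp

lemma if_fun: fixes F G :: "'l pfun" shows "(\<lambda>x. F x + (if C then G x else 0)) = (if C then (\<lambda>x. F x + G x) else F)"
  by auto

lemma GT_tD: assumes "GT S H" shows "GT S (TD e H)"
  unfolding GT_def
proof (intro conjI allI impI)
  fix \<alpha> show "\<not> V \<alpha> \<Longrightarrow> TD e H \<alpha> = (\<lambda>_. 0)" by (rule tD_invalid)
next
  fix \<alpha>
  show "Sm (TD e H \<alpha>)"
    using assms unfolding GT_def
    by (cases "V \<alpha>") (auto simp: tD_valid tD_invalid if_fun Sm_const intro!: Sm_add Sm_pD)
  show "dep S (TD e H \<alpha>)"
    using assms unfolding GT_def
    by (cases "V \<alpha>") (auto simp: tD_valid tD_invalid if_fun dep_const intro!: dep_add dep_pD)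
qed

lemma pD_if:
  assumes "pdiff e F" "pdiff e G"
  shows "pD e (\<lambda>x. F x + (if C then G x else 0)) = (\<lambda>x. pD e F x + (if C then pD e G x else 0))"
  using assms by (cases C) (auto simp: pD_add)

lemma tD2:
  assumes "GT S H" "V \<alpha>" "a \<noteq> b"
  shows "TD a (TD b H) \<alpha> x = pD a (pD b (H \<alpha>)) x
     + (if b \<in> Ep l \<and> 1 \<le> \<alpha> b then pD a (H (\<alpha>(b := \<alpha> b - 1))) x else 0)
     + (if a \<in> Ep l \<and> 1 \<le> \<alpha> a then pD b (H (\<alpha>(a := \<alpha> a - 1))) x
         + (if b \<in> Ep l \<and> 1 \<le> \<alpha> b then H (\<alpha>(a := \<alpha> a - 1, b := \<alpha> b - 1)) x else 0) else 0)"
proof -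
  have Sm: "Sm (H \<beta>)" for \<beta> using assms unfolding GT_def by blast
  have pd: "pdiff e (H \<beta>)" "pdiff e (pD e' (H \<beta>))" for e e' \<beta> using Sm Sm_pdiff Sm_pD by blast+
  have v: "V (\<alpha>(a := \<alpha> a - 1))" using V_dec[OF assms(2)] .
  have e1: "TD b H \<alpha> = (\<lambda>x. pD b (H \<alpha>) x + (if b \<in> Ep l \<and> 1 \<le> \<alpha> b then H (\<alpha>(b := \<alpha> b - 1)) x else 0))"
    using tD_valid[OF assms(2)] .
  have e2: "TD b H (\<alpha>(a := \<alpha> a - 1)) x = pD b (H (\<alpha>(a := \<alpha> a - 1))) x
      + (if b \<in> Ep l \<and> 1 \<le> \<alpha> b then H (\<alpha>(a := \<alpha> a - 1, b := \<alpha> b - 1)) x else 0)"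
    using tD_valid[OF v, of b H] assms(3) by simp
  have e3: "pD a (TD b H \<alpha>) x = pD a (pD b (H \<alpha>)) x
     + (if b \<in> Ep l \<and> 1 \<le> \<alpha> b then pD a (H (\<alpha>(b := \<alpha> b - 1))) x else 0)"
    unfolding e1 pD_if[OF pd(2) pd(1)] by simp
  show ?thesis
    using tD_valid[OF assms(2), of a "TD b H"] e2 e3 by simp
qed

lemma tD_comm:
  assumes "GT S H"
  shows "TD a (TD b H) = TD b (TD a H)"
proof (intro ext)
  fix \<alpha> x
  show "TD a (TD b H) \<alpha> x = TD b (TD a H) \<alpha> x"
  proof (cases "V \<alpha>")
    case False
    then show ?thesis by (simp add: tD_invalid)
  next
    case True
    have Sm: "Sm (H \<beta>)" for \<beta> using assms unfolding GT_def by blast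
    show ?thesis
    proof (cases "a = b")
      case True then show ?thesis by simp
    next
      case False
      have tw: "\<alpha>(a := \<alpha> a - 1, b := \<alpha> b - 1) = \<alpha>(b := \<alpha> b - 1, a := \<alpha> a - 1)"
        using False by (simp add: fun_upd_twist)
      show ?thesis
        unfolding tD2[OF assms True False] tD2[OF assms True False[symmetric]]
          clairaut[OF Sm, of a b] tw by auto
    qed
  qed
qed

definition cmp :: "'l idx list \<Rightarrow> 'l tens \<Rightarrow> 'l tens" where
  "cmp L H = foldr TD L H"

lemma cmp_simps[simp]: "cmp [] H = H" "cmp (e # L) H = TD e (cmp L H)"
  unfolding cmp_def by auto

lemma cmp_append: "cmp (L1 @ L2) H = cmp L1 (cmp L2 H)"
  unfolding cmp_def by simp

lemma GT_cmp: "GT S H \<Longrightarrow> GT S (cmp L H)"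
  by (induction L) (auto intro: GT_tD)

lemma cmp_tD_swap: "GT S G \<Longrightarrow> cmp L (TD a G) = TD a (cmp L G)"
proof (induction L)
  case Nil then show ?case by simp
next
  case (Cons e L)
  then show ?case using tD_comm[OF GT_cmp[OF Cons.prems, of L]] by simp
qed

lemma cmp_perm: "GT S H \<Longrightarrow> mset L = mset L' \<Longrightarrow> cmp L H = cmp L' H"
proof (induction L arbitrary: L')
  case Nil then show ?case by simp
next
  case (Cons a L)
  then have "a \<in> set L'" by (metis list.set_intros(1) set_mset_mset)
  then obtain L1 L2 where L': "L' = L1 @ a # L2" by (meson split_list)
  have m: "mset L = mset (L1 @ L2)" using Cons.prems(2) L' by simp
  have "cmp L' H = cmp L1 (TD a (cmp L2 H))" unfolding L' cmp_append by simp
  also have "\<dots> = TD a (cmp L1 (cmp L2 H))" using cmp_tD_swap GT_cmp[OF Cons.prems(1)] by blast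
  also have "\<dots> = TD a (cmp L H)" using Cons.IH[OF Cons.prems(1) m] cmp_append by simp
  finally show ?case by simp
qed

definition DD :: "'l idx multiset \<Rightarrow> 'l tens \<Rightarrow> 'l tens" where
  "DD \<mu> H = cmp (SOME L. mset L = \<mu>) H"

lemma DD_cmp: "GT S H \<Longrightarrow> DD (mset L) H = cmp L H"
  unfolding DD_def by (rule cmp_perm) (auto intro: someI)

lemma DD_ex: "\<exists>L. mset L = \<mu>" using ex_mset .

lemma GT_DD: "GT S H \<Longrightarrow> GT S (DD \<mu> H)"
  unfolding DD_def by (rule GT_cmp)

lemma DD_add: "GT S H \<Longrightarrow> TD e (DD \<mu> H) = DD (add_mset e \<mu>) H"
proof -
  assume G: "GT S H"
  obtain L where L: "mset L = \<mu>" using DD_ex by blast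
  have "DD (add_mset e \<mu>) H = cmp (e # L) H" using DD_cmp[OF G, of "e # L"] L by simp
  also have "\<dots> = TD e (cmp L H)" by simp
  finally show ?thesis using DD_cmp[OF G, of L] L by simp
qed

lemma DD_empty: "GT S H \<Longrightarrow> DD {#} H = H"
  using DD_cmp[of S H "[]"] by simp

lemma tD_zero_out:
  assumes "GT S G" "e \<notin> S" "e \<notin> Ep l"
  shows "TD e G = (\<lambda>\<alpha> x. 0)"
proof (intro ext)
  fix \<alpha> x
  show "TD e G \<alpha> x = 0"
    using assms pD_nodep[of S "G \<alpha>" e] unfolding GT_def
    by (cases "V \<alpha>") (auto simp: tD_valid tD_invalid)
qed

lemma tD_zero: "TD e (\<lambda>\<alpha> x. 0) = (\<lambda>\<alpha> x. 0)"
  unfolding tD_def by (auto simp: pD_const)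

lemma cmp_zero: "cmp L (\<lambda>\<alpha> x. 0) = (\<lambda>\<alpha> x. 0)"
  by (induction L) (auto simp: tD_zero)

lemma DD_out:
  assumes "GT S H" "e \<in># \<mu>" "e \<notin> S" "e \<notin> Ep l"
  shows "DD \<mu> H = (\<lambda>\<alpha> x. 0)"
proof -
  have "DD \<mu> H = TD e (DD (\<mu> - {#e#}) H)"
    using DD_add[OF assms(1), of e "\<mu> - {#e#}"] assms(2) by simp
  also have "\<dots> = (\<lambda>\<alpha> x. 0)"
    by (rule tD_zero_out[OF GT_DD[OF assms(1)] assms(3,4)])
  finally show ?thesis .
qed

lemma pow_cmp: "(TD e ^^ n) (cmp L H) = cmp (replicate n e @ L) H"
  by (induction n) auto

lemma foldr_tDm: "foldr (\<lambda>e G. (TD e ^^ m e) \<circ> G) es id H = cmp (concat (map (\<lambda>e. replicate (m e) e) es)) H"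
  by (induction es) (auto simp: pow_cmp cmp_append)

lemma count_concat_rep:
  "distinct es \<Longrightarrow> count (mset (concat (map (\<lambda>e. replicate (m e) e) es))) x = (if x \<in> set es then m x else 0)"
  by (induction es) (auto simp: count_eq_zero_iff)

lemma tDm_DD:
  assumes "GT S H" "finite {e. m e \<noteq> 0}"
  shows "tDm Ep ks l m H = DD (Abs_multiset m) H"
proof -
  define es where "es = (SOME es. distinct es \<and> set es = {e. m e \<noteq> 0})"
  have es: "distinct es \<and> set es = {e. m e \<noteq> 0}"
    unfolding es_def by (rule someI_ex) (use assms(2) finite_distinct_list in blast)
  have ms: "count (Abs_multiset m) = m" using assms(2) by (intro count_Abs_multiset) auto
  have "mset (concat (map (\<lambda>e. replicate (m e) e) es)) = Abs_multiset m"
    by (rule multiset_eqI) (use es ms in \<open>auto simp: count_concat_rep\<close>)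
  then show ?thesis
    unfolding tDm_def es_def[symmetric] Let_def foldr_tDm using DD_cmp[OF assms(1)] by metis
qed

lemma tdi_eq:
  assumes "\<And>\<alpha>. dep S (H \<alpha>)" "finite T" "S \<subseteq> T" "Ep l \<subseteq> T"
  shows "tdi Ep ks l i H \<alpha> x = (\<Sum>u\<in>T. x (shift_i i u) * TD u H \<alpha> x)"
proof (cases "V \<alpha>")
  case False
  then show ?thesis unfolding tdi_def by (simp add: tD_invalid)
next
  case True
  have "dP i (H \<alpha>) x = (\<Sum>u\<in>T. x (shift_i i u) * pD u (H \<alpha>) x)"
    unfolding dP_def
  proof (rule Sum_any.expand_superset[OF assms(2)])
    show "{a. x (shift_i i a) * pD a (H \<alpha>) x \<noteq> 0} \<subseteq> T"
    proof
      fix u assume "u \<in> {a. x (shift_i i a) * pD a (H \<alpha>) x \<noteq> 0}"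
      then have "pD u (H \<alpha>) x \<noteq> 0" by simp
      then have "u \<in> S" using pD_nodep[OF assms(1), of u \<alpha>] by (metis (mono_tags))
      then show "u \<in> T" using assms(3) by blast
    qed
  qed
  moreover have "(\<Sum>e\<in>{e \<in> Ep l. 1 \<le> \<alpha> e}. H (\<alpha>(e := \<alpha> e - 1)) x * x (shift_i i e)) =
     (\<Sum>u\<in>T. x (shift_i i u) * (if u \<in> Ep l \<and> 1 \<le> \<alpha> u then H (\<alpha>(u := \<alpha> u - 1)) x else 0))"
  proof -
    have "{e \<in> Ep l. 1 \<le> \<alpha> e} = {u \<in> T. u \<in> Ep l \<and> 1 \<le> \<alpha> u}" using assms(4) by auto
    then show ?thesis
      using sum.inter_filter[OF assms(2), of "\<lambda>u. x (shift_i i u) * H (\<alpha>(u := \<alpha> u - 1)) x" "\<lambda>u. u \<in> Ep l \<and> 1 \<le> \<alpha> u"]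
      by (simp add: mult.commute if_distrib cong: if_cong)
  qed
  ultimately show ?thesis
    unfolding tdi_def using True by (simp add: tD_valid distrib_left sum.distrib)
qed

definition cm :: "'l pfun \<Rightarrow> 'l tens \<Rightarrow> 'l tens" where
  "cm c H = (\<lambda>\<alpha> x. c x * H \<alpha> x)"

lemma GT_cm: "GT S H \<Longrightarrow> Sm c \<Longrightarrow> dep Sc c \<Longrightarrow> GT (Sc \<union> S) (cm c H)"
  unfolding GT_def cm_def by (auto intro: Sm_mult dep_mult)

lemma tD_cm:
  assumes "GT S H" "Sm c"
  shows "TD e (cm c H) \<alpha> x = pD e c x * H \<alpha> x + c x * TD e H \<alpha> x"
proof (cases "V \<alpha>")
  case False
  then show ?thesis using assms unfolding GT_def by (simp add: tD_invalid)
next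
  case True
  have "pdiff e c" "pdiff e (H \<alpha>)" using assms Sm_pdiff unfolding GT_def by blast+
  then show ?thesis using True
    by (cases "e \<in> Ep l \<and> 1 \<le> \<alpha> e") (auto simp add: tD_valid cm_def pD_mult distrib_left)
qed

definition ts :: "('a \<Rightarrow> 'l tens) \<Rightarrow> 'a set \<Rightarrow> 'l tens" where
  "ts f A = (\<lambda>\<alpha> x. \<Sum>a\<in>A. f a \<alpha> x)"

lemma tD_ts:
  assumes "finite A" "\<And>a. a \<in> A \<Longrightarrow> GT S (f a)"
  shows "TD e (ts f A) \<alpha> x = (\<Sum>a\<in>A. TD e (f a) \<alpha> x)"
proof (cases "V \<alpha>")
  case False
  then show ?thesis by (simp add: tD_invalid)
next
  case True
  have "pdiff e (f a \<alpha>)" if "a \<in> A" for a using assms(2)[OF that] Sm_pdiff unfolding GT_def by blast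
  then have "pD e (\<lambda>x. \<Sum>a\<in>A. f a \<alpha> x) = (\<lambda>x. \<Sum>a\<in>A. pD e (f a \<alpha>) x)"
    by (rule pD_sum[OF assms(1)])
  then show ?thesis using True unfolding ts_def
    by (cases "e \<in> Ep l \<and> 1 \<le> \<alpha> e") (auto simp add: tD_valid sum.distrib)
qed

lemma dep_sum:
  fixes f :: "'a \<Rightarrow> 'l pfun"
  assumes "\<And>a. a \<in> A \<Longrightarrow> dep S (f a)" shows "dep S (\<lambda>x. \<Sum>a\<in>A. f a x)"
  unfolding dep_def
proof (intro allI impI)
  fix x y :: "'l asg" assume xy: "\<forall>e\<in>S. x e = y e"
  have "f a x = f a y" if "a \<in> A" for a using assms[OF that] xy unfolding dep_def by blast
  then show "(\<Sum>a\<in>A. f a x) = (\<Sum>a\<in>A. f a y)" by (rule sum.cong[OF refl])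
qed

lemma GT_ts:
  assumes "finite A" "\<And>a. a \<in> A \<Longrightarrow> GT S (f a)"
  shows "GT S (ts f A)"
  unfolding GT_def
proof (intro conjI allI impI)
  fix \<alpha>
  show "\<not> V \<alpha> \<Longrightarrow> ts f A \<alpha> = (\<lambda>_. 0)"
    using assms(2) unfolding GT_def ts_def by simp
  show "Sm (ts f A \<alpha>)"
    using assms(2) unfolding GT_def ts_def by (intro Sm_sum assms(1)) blast
  show "dep S (ts f A \<alpha>)"
    using assms(2) unfolding GT_def ts_def by (intro dep_sum) blast
qed

lemma tdi_ts:
  assumes "finite A" "\<And>a. a \<in> A \<Longrightarrow> GT S (f a)" "finite T" "S \<subseteq> T" "Ep l \<subseteq> T"
  shows "tdi Ep ks l i (ts f A) \<alpha> x = (\<Sum>a\<in>A. tdi Ep ks l i (f a) \<alpha> x)"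
proof -
  have "tdi Ep ks l i (ts f A) \<alpha> x = (\<Sum>u\<in>T. x (shift_i i u) * TD u (ts f A) \<alpha> x)"
    using GT_ts[OF assms(1,2)] assms(3-5) unfolding GT_def by (intro tdi_eq) auto
  also have "\<dots> = (\<Sum>u\<in>T. \<Sum>a\<in>A. x (shift_i i u) * TD u (f a) \<alpha> x)"
    by (simp add: tD_ts[OF assms(1,2)] sum_distrib_left)
  also have "\<dots> = (\<Sum>a\<in>A. \<Sum>u\<in>T. x (shift_i i u) * TD u (f a) \<alpha> x)"
    by (rule sum.swap)
  also have "\<dots> = (\<Sum>a\<in>A. tdi Ep ks l i (f a) \<alpha> x)"
    using assms(2-5) unfolding GT_def by (intro sum.cong refl tdi_eq[symmetric]) auto
  finally show ?thesis .
qed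

end

definition shp :: "nat list \<times> 'l idx \<Rightarrow> 'l idx" where
  "shp p = shift_q (fst p) (snd p)"

definition gfac :: "nat \<Rightarrow> nat list \<times> 'l idx \<Rightarrow> 'l pfun" where
  "gfac n p = (\<lambda>x. (1 / fact n) * ((1 / vfact (fst p)) * x (shp p)) ^ n)"

definition Cf :: "(nat list \<times> 'l idx) multiset \<Rightarrow> 'l pfun" where
  "Cf \<nu> = (\<lambda>x. \<Prod>p\<in>set_mset \<nu>. gfac (count \<nu> p) p x)"

lemma gfac0[simp]: "gfac 0 p x = 1"
  unfolding gfac_def by simp

lemma fact_frac: "(1 / fact (Suc m)) * (real (Suc m) * z) = (1 / fact m) * (z::real)"
proof -
  have "fact (Suc m) = real (Suc m) * (fact m :: real)" by (rule fact_Suc)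
  moreover have "real (Suc m) \<noteq> 0" by simp
  ultimately show ?thesis by simp
qed

lemma vfact_pos: "vfact q > 0"
  unfolding vfact_def by (auto intro: prod_pos)

lemma Cf_over:
  assumes "finite A" "set_mset \<nu> \<subseteq> A"
  shows "Cf \<nu> x = (\<Prod>p\<in>A. gfac (count \<nu> p) p x)"
  unfolding Cf_def using assms
  by (intro prod.mono_neutral_left) (auto simp: not_in_iff)

lemma Cf_empty[simp]: "Cf {#} x = 1"
  unfolding Cf_def by simp

lemma Sm_gfac: "Sm (gfac n p)"
  unfolding gfac_def by (intro Sm_mult Sm_const Sm_power Sm_coord)

lemma Sm_Cf: "Sm (Cf \<nu>)"
  unfolding Cf_def by (intro Sm_prod Sm_gfac) auto

lemma dep_gfac: "dep {shp p} (gfac n p)"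
  unfolding dep_def gfac_def by auto

lemma dep_prod:
  fixes f :: "'a \<Rightarrow> 'l pfun"
  assumes "\<And>a. a \<in> A \<Longrightarrow> dep S (f a)" shows "dep S (\<lambda>x. \<Prod>a\<in>A. f a x)"
  unfolding dep_def
proof (intro allI impI)
  fix x y :: "'l asg" assume xy: "\<forall>e\<in>S. x e = y e"
  have "f a x = f a y" if "a \<in> A" for a using assms[OF that] xy unfolding dep_def by blast
  then show "(\<Prod>a\<in>A. f a x) = (\<Prod>a\<in>A. f a y)" by (rule prod.cong[OF refl])
qed

lemma dep_Cf: "dep (shp ` set_mset \<nu>) (Cf \<nu>)"
  unfolding Cf_def by (intro dep_prod) (auto intro: dep_mono[OF dep_gfac])

lemma pD_gfac:
  "pD e (gfac n p) x = (if shp p = e \<and> 1 \<le> n then (1 / vfact (fst p)) * gfac (n - 1) p x else 0)"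
proof (cases "shp p = e")
  case False
  then show ?thesis using pD_nodep[OF dep_gfac, of e p n] by auto
next
  case True
  define b where "b = 1 / vfact (fst p)"
  have g: "(\<lambda>t. gfac n p (x(e := t))) = (\<lambda>t. (1 / fact n) * (b * t) ^ n)"
    unfolding gfac_def b_def using True by auto
  have "((\<lambda>t. (1 / fact n) * (b * t) ^ n) has_real_derivative
          (1 / fact n) * (of_nat n * (b * x e) ^ (n - 1) * b)) (at (x e))"
    by (auto intro!: derivative_eq_intros)
  then have d: "pD e (gfac n p) x = (1 / fact n) * (of_nat n * (b * x e) ^ (n - 1) * b)"
    unfolding pD_def g by (rule DERIV_imp_deriv)
  show ?thesis
  proof (cases n)
    case 0
    then show ?thesis using d by simp
  next
    case (Suc m)
    have "(1 / fact n) * (of_nat n * (b * x e) ^ (n - 1) * b) = (1 / fact (Suc m)) * (real (Suc m) * ((b * x e) ^ m * b))"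
      using Suc by (simp add: ac_simps)
    also have "\<dots> = b * ((1 / fact m) * (b * x e) ^ m :: real)"
      unfolding fact_frac by simp
    finally have "(1 / fact n) * (of_nat n * (b * x e) ^ (n - 1) * b) = b * ((1 / fact m) * (b * x e) ^ m :: real)" .
    then show ?thesis using d True Suc unfolding gfac_def b_def by simp
  qed
qed

lemma pD_prod:
  fixes f :: "'a \<Rightarrow> 'l pfun"
  assumes "finite A" "\<And>a. a \<in> A \<Longrightarrow> Sm (f a)"
  shows "pD e (\<lambda>x. \<Prod>a\<in>A. f a x) x = (\<Sum>a\<in>A. pD e (f a) x * (\<Prod>b\<in>A - {a}. f b x))"
  using assms
proof (induction A rule: finite_induct)
  case empty
  then show ?case by (simp add: pD_const)
next
  case (insert a A)
  have pd: "pdiff e (f a)" "pdiff e (\<lambda>x. \<Prod>a\<in>A. f a x)"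
    using insert by (auto intro!: Sm_pdiff Sm_prod)
  have eq: "(\<lambda>x. \<Prod>a\<in>insert a A. f a x) = (\<lambda>x. f a x * (\<Prod>a\<in>A. f a x))"
    using insert by simp
  have r: "insert a A - {b} = insert a (A - {b})" if "b \<in> A" for b using that insert by auto
  have "pD e (\<lambda>x. \<Prod>a\<in>insert a A. f a x) x = pD e (f a) x * (\<Prod>a\<in>A. f a x) + f a x * (\<Sum>b\<in>A. pD e (f b) x * (\<Prod>c\<in>A - {b}. f c x))"
    unfolding eq pD_mult[OF pd] using insert by simp
  also have "\<dots> = (\<Sum>b\<in>insert a A. pD e (f b) x * (\<Prod>c\<in>insert a A - {b}. f c x))"
    using insert by (simp add: sum_distrib_left r ac_simps cong: sum.cong)
  finally show ?case .
qed

lemma pD_Cf: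
  "pD e (Cf \<nu>) x = (\<Sum>p\<in>set_mset \<nu>. if shp p = e then (1 / vfact (fst p)) * Cf (\<nu> - {#p#}) x else 0)"
proof -
  let ?A = "set_mset \<nu>"
  have "pD e (Cf \<nu>) x = (\<Sum>p\<in>?A. pD e (gfac (count \<nu> p) p) x * (\<Prod>q\<in>?A - {p}. gfac (count \<nu> q) q x))"
    unfolding Cf_def by (rule pD_prod) (auto intro: Sm_gfac)
  also have "\<dots> = (\<Sum>p\<in>?A. if shp p = e then (1 / vfact (fst p)) * Cf (\<nu> - {#p#}) x else 0)"
  proof (rule sum.cong[OF refl])
    fix p assume p: "p \<in> ?A"
    then have c: "1 \<le> count \<nu> p" by (simp add: Suc_le_eq)
    have "Cf (\<nu> - {#p#}) x = (\<Prod>q\<in>?A. gfac (count (\<nu> - {#p#}) q) q x)"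
      by (rule Cf_over) (auto dest: in_diffD)
    also have "\<dots> = gfac (count (\<nu> - {#p#}) p) p x * (\<Prod>q\<in>?A - {p}. gfac (count (\<nu> - {#p#}) q) q x)"
      using p by (subst prod.remove[of _ p]) auto
    also have "\<dots> = gfac (count \<nu> p - 1) p x * (\<Prod>q\<in>?A - {p}. gfac (count \<nu> q) q x)"
      by (intro arg_cong2[where f="(*)"] prod.cong) auto
    finally show "pD e (gfac (count \<nu> p) p) x * (\<Prod>q\<in>?A - {p}. gfac (count \<nu> q) q x) =
       (if shp p = e then (1 / vfact (fst p)) * Cf (\<nu> - {#p#}) x else 0)"
      using c by (simp add: pD_gfac)
  qed
  finally show ?thesis .
qed

lemma C_add:
  "Cf (add_mset p \<nu>) x * count (add_mset p \<nu>) p = Cf \<nu> x * x (shp p) / vfact (fst p)"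
proof -
  let ?A = "insert p (set_mset \<nu>)"
  have fin: "finite ?A" by simp
  have r: "\<And>g. (\<Prod>q\<in>?A. g q) = g p * (\<Prod>q\<in>?A - {p}. g q)"
    using prod.remove[OF fin] by blast
  have o: "(\<Prod>q\<in>?A - {p}. gfac (count (add_mset p \<nu>) q) q x) = (\<Prod>q\<in>?A - {p}. gfac (count \<nu> q) q x)"
    by (intro prod.cong) auto
  have g: "gfac (Suc n) p x * real (Suc n) = gfac n p x * x (shp p) / vfact (fst p)" for n
  proof -
    have "gfac (Suc n) p x * real (Suc n) = (1 / fact (Suc n)) * (real (Suc n) * (((1 / vfact (fst p)) * x (shp p)) ^ n * ((1 / vfact (fst p)) * x (shp p))))"
      unfolding gfac_def by (simp add: ac_simps)
    also have "\<dots> = gfac n p x * x (shp p) / vfact (fst p)"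
      unfolding fact_frac gfac_def by simp
    finally show ?thesis .
  qed
  have "Cf (add_mset p \<nu>) x = (\<Prod>q\<in>?A. gfac (count (add_mset p \<nu>) q) q x)"
    using Cf_over[OF fin, of "add_mset p \<nu>" x] by simp
  also have "\<dots> = gfac (count (add_mset p \<nu>) p) p x * (\<Prod>q\<in>?A - {p}. gfac (count (add_mset p \<nu>) q) q x)"
    by (rule prod.remove) simp_all
  also have "\<dots> = gfac (Suc (count \<nu> p)) p x * (\<Prod>q\<in>?A - {p}. gfac (count \<nu> q) q x)"
    by (subst o) simp
  finally have "Cf (add_mset p \<nu>) x = gfac (Suc (count \<nu> p)) p x * (\<Prod>q\<in>?A - {p}. gfac (count \<nu> q) q x)" .
  moreover have "Cf \<nu> x = gfac (count \<nu> p) p x * (\<Prod>q\<in>?A - {p}. gfac (count \<nu> q) q x)"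
  proof -
    have "Cf \<nu> x = (\<Prod>q\<in>?A. gfac (count \<nu> q) q x)"
      using Cf_over[OF fin, of \<nu> x] by auto
    also have "\<dots> = gfac (count \<nu> p) p x * (\<Prod>q\<in>?A - {p}. gfac (count \<nu> q) q x)"
      by (rule prod.remove) simp_all
    finally show ?thesis .
  qed
  ultimately show ?thesis
  proof -
    assume c1: "Cf (add_mset p \<nu>) x = gfac (Suc (count \<nu> p)) p x * (\<Prod>q\<in>?A - {p}. gfac (count \<nu> q) q x)"
      and c2: "Cf \<nu> x = gfac (count \<nu> p) p x * (\<Prod>q\<in>?A - {p}. gfac (count \<nu> q) q x)"
    let ?P = "(\<Prod>q\<in>?A - {p}. gfac (count \<nu> q) q x)"
    have "Cf (add_mset p \<nu>) x * count (add_mset p \<nu>) p = (gfac (Suc (count \<nu> p)) p x * real (Suc (count \<nu> p))) * ?P"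
      unfolding c1 by simp
    also have "\<dots> = (gfac (count \<nu> p) p x * x (shp p) / vfact (fst p)) * ?P"
      unfolding g by simp
    also have "\<dots> = Cf \<nu> x * x (shp p) / vfact (fst p)"
      unfolding c2 by simp
    finally show ?thesis .
  qed
qed

definition up :: "nat \<Rightarrow> nat list \<Rightarrow> nat list" where
  "up i q = q[i := q ! i + 1]"

definition dn :: "nat \<Rightarrow> nat list \<Rightarrow> nat list" where
  "dn i q = q[i := q ! i - 1]"

lemma shift_i_q:
  assumes "length (snd u) = length q" "i < length q"
  shows "shift_i i (shift_q q u) = shift_q (up i q) u"
  unfolding shift_i_def shift_q_def up_def vadd_def using assms
  by (auto intro!: nth_equalityI simp: nth_list_update)

lemma vfact_up:
  assumes "i < length q"
  shows "vfact (up i q) = real (q ! i + 1) * vfact q"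
proof -
  have "vfact (up i q) = fact (q ! i + 1) * (\<Prod>j\<in>{..<length q} - {i}. fact (q ! j))"
    unfolding vfact_def up_def using assms
    by (subst prod.remove[of _ i]) (auto intro!: prod.cong)
  moreover have "vfact q = fact (q ! i) * (\<Prod>j\<in>{..<length q} - {i}. fact (q ! j))"
    unfolding vfact_def using assms by (subst prod.remove[of _ i]) auto
  moreover have "fact (q ! i + 1) = real (q ! i + 1) * (fact (q ! i) :: real)"
    by (simp only: Suc_eq_plus1[symmetric] fact_Suc)
  ultimately show ?thesis by (simp only: mult.assoc)
qed

lemma vfact_rep0: "vfact (replicate n 0) = 1"
  unfolding vfact_def by simp

lemma sum_mset_count_over:
  assumes "finite A" "set_mset \<nu> \<subseteq> A"
  shows "(\<Sum>p\<in>#\<nu>. f p) = (\<Sum>p\<in>A. of_nat (count \<nu> p) * (f p :: 'b :: comm_semiring_1))"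
  using assms(2)
proof (induction \<nu>)
  case empty
  then show ?case by simp
next
  case (add x \<nu>)
  have xA: "x \<in> A" using add.prems by simp
  have "(\<Sum>p\<in>A. of_nat (count (add_mset x \<nu>) p) * f p) =
        (\<Sum>p\<in>A. of_nat (count \<nu> p) * f p + (if p = x then f p else 0))"
    by (intro sum.cong) (auto simp: algebra_simps)
  also have "\<dots> = (\<Sum>p\<in>A. of_nat (count \<nu> p) * f p) + f x"
    using xA assms(1) by (simp add: sum.distrib)
  finally show ?case using add by (simp add: add.commute)
qed

lemma sum_mset_count:
  "(\<Sum>p\<in>#\<nu>. f p) = (\<Sum>p\<in>set_mset \<nu>. of_nat (count \<nu> p) * (f p :: 'b :: comm_semiring_1))"
  by (rule sum_mset_count_over) auto

context TS
begin

lemma tdi_term: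
  assumes G: "GT S0 H" and T: "finite T" "S0 \<union> shp ` set_mset \<nu> \<union> Ep l \<subseteq> T"
    and E0: "finite E0" "S0 \<union> Ep l \<subseteq> E0"
  shows "tdi Ep ks l i (cm (\<lambda>x. K * Cf \<nu> x) H) \<alpha> x =
    K * (\<Sum>p\<in>set_mset \<nu>. x (shift_i i (shp p)) * (1 / vfact (fst p)) * Cf (\<nu> - {#p#}) x) * H \<alpha> x
    + K * Cf \<nu> x * (\<Sum>u\<in>E0. x (shift_i i u) * TD u H \<alpha> x)"
proof -
  let ?c = "\<lambda>x. K * Cf \<nu> x"
  have Smc: "Sm ?c" by (intro Sm_mult Sm_const Sm_Cf)
  have depc: "dep ({} \<union> shp ` set_mset \<nu>) ?c" by (intro dep_mult dep_const dep_Cf)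
  have GT1: "GT (({} \<union> shp ` set_mset \<nu>) \<union> S0) (cm ?c H)" by (rule GT_cm[OF G Smc depc])
  have GTH: "\<And>\<alpha>. dep S0 (H \<alpha>)" using G unfolding GT_def by blast
  have "tdi Ep ks l i (cm ?c H) \<alpha> x = (\<Sum>u\<in>T. x (shift_i i u) * TD u (cm ?c H) \<alpha> x)"
    by (rule tdi_eq) (use GT1 T in \<open>auto simp: GT_def\<close>)
  also have "\<dots> = (\<Sum>u\<in>T. x (shift_i i u) * (pD u ?c x * H \<alpha> x + ?c x * TD u H \<alpha> x))"
    by (simp add: tD_cm[OF G Smc])
  also have "\<dots> = (\<Sum>u\<in>T. x (shift_i i u) * pD u ?c x) * H \<alpha> x + ?c x * (\<Sum>u\<in>T. x (shift_i i u) * TD u H \<alpha> x)"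
    by (simp add: distrib_left sum.distrib sum_distrib_left sum_distrib_right ac_simps)
  also have "(\<Sum>u\<in>T. x (shift_i i u) * TD u H \<alpha> x) = tdi Ep ks l i H \<alpha> x"
    by (rule tdi_eq[symmetric]) (use GTH T in auto)
  also have "\<dots> = (\<Sum>u\<in>E0. x (shift_i i u) * TD u H \<alpha> x)"
    by (rule tdi_eq) (use GTH E0 in auto)
  also have "(\<Sum>u\<in>T. x (shift_i i u) * pD u ?c x) =
      K * (\<Sum>p\<in>set_mset \<nu>. x (shift_i i (shp p)) * (1 / vfact (fst p)) * Cf (\<nu> - {#p#}) x)"
  proof -
    have pc: "pD u ?c x = K * pD u (Cf \<nu>) x" for u
      using pD_mult[OF pdiff_const Sm_pdiff[OF Sm_Cf], of u K \<nu>] by (simp add: pD_const)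
    have "(\<Sum>u\<in>T. x (shift_i i u) * pD u ?c x) =
        K * (\<Sum>u\<in>T. \<Sum>p\<in>set_mset \<nu>. if shp p = u then x (shift_i i u) * ((1 / vfact (fst p)) * Cf (\<nu> - {#p#}) x) else 0)"
      by (simp add: pc pD_Cf sum_distrib_left if_distrib ac_simps cong: if_cong)
    also have "\<dots> = K * (\<Sum>p\<in>set_mset \<nu>. \<Sum>u\<in>T. if shp p = u then x (shift_i i u) * ((1 / vfact (fst p)) * Cf (\<nu> - {#p#}) x) else 0)"
      by (subst sum.swap) simp
    also have "\<dots> = K * (\<Sum>p\<in>set_mset \<nu>. x (shift_i i (shp p)) * (1 / vfact (fst p)) * Cf (\<nu> - {#p#}) x)"
      using T by (intro arg_cong[where f="(*) K"] sum.cong refl) (auto simp: sum.delta')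
    finally show ?thesis .
  qed
  finally show ?thesis by (simp add: ac_simps)
qed

end

definition ei :: "nat \<Rightarrow> nat \<Rightarrow> nat list" where
  "ei d i = (replicate (d + 1) 0)[i := 1]"

definition wt :: "(nat list \<times> 'l idx) multiset \<Rightarrow> nat \<Rightarrow> nat" where
  "wt \<nu> j = (\<Sum>p\<in>#\<nu>. fst p ! j)"

lemma wt_add[simp]: "wt (add_mset p \<nu>) j = fst p ! j + wt \<nu> j"
  unfolding wt_def by simp

lemma wt_empty[simp]: "wt {#} j = 0"
  unfolding wt_def by simp

lemma wt_ge: "p \<in># \<nu> \<Longrightarrow> fst p ! j \<le> wt \<nu> j"
  unfolding wt_def by (metis insert_DiffM le_add1 sum_mset.insert)

lemma wt_diff: "p \<in># \<nu> \<Longrightarrow> wt (\<nu> - {#p#}) j = wt \<nu> j - fst p ! j"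
  by (metis add_diff_cancel_left' insert_DiffM wt_add)

lemma up_nth: "j < length q \<Longrightarrow> up i q ! j = (if j = i then q ! i + 1 else q ! j)"
  unfolding up_def by auto

lemma dn_nth: "j < length q \<Longrightarrow> dn i q ! j = (if j = i then q ! i - 1 else q ! j)"
  unfolding dn_def by auto

lemma ei_nth: "j < d + 1 \<Longrightarrow> ei d i ! j = (if j = i then 1 else 0)"
  unfolding ei_def by (auto simp: nth_list_update simp del: replicate.simps)

lemma length_up[simp]: "length (up i q) = length q" unfolding up_def by simp
lemma length_dn[simp]: "length (dn i q) = length q" unfolding dn_def by simp
lemma length_ei[simp]: "length (ei d i) = d + 1" by (simp only: ei_def length_list_update length_replicate)

lemma up_dn: "1 \<le> q ! i \<Longrightarrow> up i (dn i q) = q"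
  unfolding up_def dn_def by (cases "i < length q") (auto simp: list_update_beyond)

lemma dn_up: "dn i (up i q) = q"
  unfolding up_def dn_def by (cases "i < length q") (auto simp: list_update_beyond)

lemma vfact_ei: "vfact (ei d i) = 1"
  unfolding vfact_def
proof (rule prod.neutral, intro ballI)
  fix j assume "j \<in> {..<length (ei d i)}"
  then show "fact (ei d i ! j) = (1::real)" by (auto simp: ei_nth)
qed

lemma shift_q_ei:
  assumes "length (snd u) = d + 1" "i \<le> d"
  shows "shift_q (ei d i) u = shift_i i u"
  unfolding shift_q_def shift_i_def vadd_def using assms
  by (auto intro!: nth_equalityI simp: ei_nth nth_list_update)

locale MS = TS Ep ks l for Ep :: "'l \<Rightarrow> 'l idx set" and ks :: nat and l :: 'l +
  fixes d :: nat and E0 :: "'l idx set" and S0 :: "'l idx set" and Fh :: "'l tens"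
  assumes finE0: "finite E0" and S0E0: "S0 \<subseteq> E0" and EpE0: "Ep l \<subseteq> E0"
    and E0E: "E0 \<subseteq> Eset d" and GFh: "GT S0 Fh"
begin

definition Qp :: "nat list set" where
  "Qp = {q. length q = d + 1 \<and> q \<noteq> replicate (d + 1) 0}"

definition NN :: "nat list \<Rightarrow> (nat list \<times> 'l idx) multiset set" where
  "NN k = {\<nu>. set_mset \<nu> \<subseteq> Qp \<times> E0 \<and> (\<forall>j\<le>d. wt \<nu> j = k ! j)}"

definition G :: "(nat list \<times> 'l idx) multiset \<Rightarrow> 'l tens" where
  "G \<nu> = DD (image_mset snd \<nu>) Fh"

definition R :: "nat list \<Rightarrow> 'l tens" where
  "R k = (\<lambda>\<alpha> x. vfact k * (\<Sum>\<nu>\<in>NN k. Cf \<nu> x * G \<nu> \<alpha> x))"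

lemma GT_G: "GT S0 (G \<nu>)"
  unfolding G_def by (rule GT_DD[OF GFh])

lemma Qp_nonzero: "q \<in> Qp \<Longrightarrow> \<exists>j\<le>d. q ! j \<noteq> 0"
proof (rule ccontr)
  assume q: "q \<in> Qp" and "\<not> (\<exists>j\<le>d. q ! j \<noteq> 0)"
  then have "\<forall>j<d+1. q ! j = 0" by auto
  then have "q = replicate (d + 1) 0" using q unfolding Qp_def
    by (intro nth_equalityI) (auto simp del: replicate.simps)
  then show False using q unfolding Qp_def by blast
qed

lemma Qp_sum: "q \<in> Qp \<Longrightarrow> 1 \<le> (\<Sum>j\<le>d. q ! j)"
proof -
  assume "q \<in> Qp"
  then obtain j where j: "j \<le> d" "q ! j \<noteq> 0" using Qp_nonzero by blast
  then have "q ! j \<le> (\<Sum>j\<le>d. q ! j)" by (intro member_le_sum) auto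
  then show ?thesis using j by linarith
qed

lemma sum_mset_sum_swap: "(\<Sum>p\<in>#\<nu>. \<Sum>j\<in>J. f p j) = (\<Sum>j\<in>J. \<Sum>p\<in>#\<nu>. (f p j :: 'b :: comm_monoid_add))"
  by (induction \<nu>) (auto simp: sum.distrib)

lemma finite_NN:
  assumes k: "length k = d + 1"
  shows "finite (NN k)"
proof -
  define B where "B = sum_list k"
  define QB where "QB = {q. set q \<subseteq> {0..B} \<and> length q \<le> d + 1}"
  have finQB: "finite QB" unfolding QB_def by (rule finite_lists_length_le) simp
  have kB: "k ! j \<le> B" if "j \<le> d" for j
    unfolding B_def by (rule elem_le_sum_list) (use that k in simp)
  have "NN k \<subseteq> mset ` {xs. set xs \<subseteq> QB \<times> E0 \<and> length xs \<le> B}"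
  proof
    fix \<nu> assume \<nu>: "\<nu> \<in> NN k"
    then have sub: "set_mset \<nu> \<subseteq> Qp \<times> E0" and w: "\<forall>j\<le>d. wt \<nu> j = k ! j" unfolding NN_def by auto
    have "fst p \<in> QB" if p: "p \<in># \<nu>" for p
    proof -
      have l: "length (fst p) = d + 1" using sub p unfolding Qp_def by auto
      have "y \<le> B" if y: "y \<in> set (fst p)" for y
      proof -
        obtain j where j: "j < length (fst p)" "y = fst p ! j" using y by (auto simp: in_set_conv_nth)
        have jd: "j \<le> d" using j l by simp
        have "fst p ! j \<le> wt \<nu> j" by (rule wt_ge[OF p])
        then show ?thesis using j(2) w jd kB[OF jd] by simp
      qed
      then show ?thesis unfolding QB_def using l by auto
    qed
    then have s1: "set_mset \<nu> \<subseteq> QB \<times> E0" using sub by auto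
    have one: "(1::nat) \<le> (\<Sum>j\<le>d. fst p ! j)" if "p \<in># \<nu>" for p
    proof -
      have "fst p \<in> Qp" using sub that by auto
      then show ?thesis by (rule Qp_sum)
    qed
    have "size \<nu> = (\<Sum>p\<in>#\<nu>. (1::nat))" by simp
    also have "\<dots> \<le> (\<Sum>p\<in>#\<nu>. \<Sum>j\<le>d. fst p ! j)"
      by (rule sum_mset_mono) (rule one)
    also have "\<dots> = (\<Sum>j\<le>d. wt \<nu> j)"
      unfolding wt_def by (rule sum_mset_sum_swap)
    also have "\<dots> = (\<Sum>j\<le>d. k ! j)" using w by simp
    also have "\<dots> = B" unfolding B_def sum_list_sum_nth k
      by (rule sum.cong) auto
    finally have sz: "size \<nu> \<le> B" .
    obtain xs where xs: "mset xs = \<nu>" using ex_mset by blast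
    have "set xs \<subseteq> QB \<times> E0" using xs s1 by auto
    moreover have "length xs \<le> B" using xs sz by auto
    ultimately show "\<nu> \<in> mset ` {xs. set xs \<subseteq> QB \<times> E0 \<and> length xs \<le> B}"
      using xs by blast
  qed
  moreover have "finite (mset ` {xs. set xs \<subseteq> QB \<times> E0 \<and> length xs \<le> B})"
    by (intro finite_imageI finite_lists_length_le finite_cartesian_product finQB finE0)
  ultimately show ?thesis by (rule finite_subset)
qed

lemma NN0: "NN (replicate (d + 1) 0) = {{#}}"
proof -
  have "\<nu> = {#}" if "\<nu> \<in> NN (replicate (d + 1) 0)" for \<nu>
  proof (rule ccontr)
    assume "\<nu> \<noteq> {#}"
    then obtain p where p: "p \<in># \<nu>" by blast
    then have "fst p \<in> Qp" using that unfolding NN_def by auto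
    then obtain j where j: "j \<le> d" "fst p ! j \<noteq> 0" using Qp_nonzero by blast
    have "wt \<nu> j = 0" using that j unfolding NN_def by (auto simp del: replicate.simps)
    then show False using wt_ge[OF p, of j] j by simp
  qed
  moreover have "{#} \<in> NN (replicate (d + 1) 0)"
    unfolding NN_def by (auto simp del: replicate.simps)
  ultimately show ?thesis by blast
qed

lemma R0: "R (replicate (d + 1) 0) = Fh"
  unfolding R_def NN0 G_def by (simp add: vfact_rep0 DD_empty[OF GFh] del: replicate.simps)

lemma aux_cancel: "(a::real) \<noteq> 0 \<Longrightarrow> a * (c * y / (a * v)) * g = y * (1 / v) * c * g"
  by (simp add: field_simps)

lemma E0_len: "u \<in> E0 \<Longrightarrow> length (snd u) = d + 1"
  using E0E unfolding Eset_def by auto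

lemma Qp_len: "q \<in> Qp \<Longrightarrow> length q = d + 1"
  unfolding Qp_def by auto

lemma rep0_nth: "j < d + 1 \<Longrightarrow> replicate (d + 1) 0 ! j = (0::nat)"
  by (simp del: replicate.simps)

lemma up_Qp: assumes "q \<in> Qp" "i \<le> d" shows "up i q \<in> Qp"
proof -
  have l: "length q = d + 1" using assms Qp_len by blast
  have "up i q ! i \<noteq> 0" using l assms(2) by (simp add: up_nth)
  then have "up i q \<noteq> replicate (d + 1) 0" using assms(2) rep0_nth by force
  then show ?thesis unfolding Qp_def using l by simp
qed

lemma ei_Qp: assumes "i \<le> d" shows "ei d i \<in> Qp"
proof -
  have "ei d i ! i = 1" using assms by (simp add: ei_nth)
  then have "ei d i \<noteq> replicate (d + 1) 0" using assms rep0_nth by force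
  then show ?thesis unfolding Qp_def by simp
qed

lemma dn_ei: assumes "i \<le> d" shows "dn i (ei d i) = replicate (d + 1) 0"
  by (rule nth_equalityI) (use assms in \<open>auto simp: dn_nth ei_nth simp del: replicate.simps\<close>)

lemma up_ne_ei: assumes "q \<in> Qp" "i \<le> d" shows "up i q \<noteq> ei d i"
proof
  assume "up i q = ei d i"
  then have "q = replicate (d + 1) 0" using dn_up[of i q] dn_ei[OF assms(2)] by simp
  then show False using assms(1) unfolding Qp_def by simp
qed

lemma dn_Qp:
  assumes "q \<in> Qp" "i \<le> d" "q ! i \<noteq> 0" "q \<noteq> ei d i"
  shows "dn i q \<in> Qp"
proof -
  have l: "length q = d + 1" using assms Qp_len by blast
  have "dn i q \<noteq> replicate (d + 1) 0"
  proof
    assume z: "dn i q = replicate (d + 1) 0"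
    have "q = ei d i"
    proof (rule nth_equalityI)
      show "length q = length (ei d i)" using l by simp
      fix j assume j: "j < length q"
      have "dn i q ! j = 0" using z j l rep0_nth by simp
      then show "q ! j = ei d i ! j" using j l assms(3) by (auto simp: dn_nth ei_nth split: if_splits)
    qed
    then show False using assms(4) by simp
  qed
  then show ?thesis unfolding Qp_def using l by simp
qed

lemma NN_f1:
  assumes "\<nu> \<in> NN k" "p \<in># \<nu>" "i \<le> d" "length k = d + 1"
  shows "add_mset (up i (fst p), snd p) (\<nu> - {#p#}) \<in> NN (up i k)"
proof -
  have pQ: "fst p \<in> Qp" "snd p \<in> E0" using assms(1,2) unfolding NN_def by auto
  have sub: "set_mset (\<nu> - {#p#}) \<subseteq> Qp \<times> E0" using assms(1) unfolding NN_def by (auto dest: in_diffD)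
  have l: "length (fst p) = d + 1" using pQ Qp_len by blast
  have "wt (add_mset (up i (fst p), snd p) (\<nu> - {#p#})) j = up i k ! j" if j: "j \<le> d" for j
  proof -
    have "wt (add_mset (up i (fst p), snd p) (\<nu> - {#p#})) j = up i (fst p) ! j + (wt \<nu> j - fst p ! j)"
      by (simp add: wt_diff[OF assms(2)])
    also have "\<dots> = up i k ! j"
      using wt_ge[OF assms(2), of j] assms(1) j l assms(4) unfolding NN_def by (auto simp: up_nth)
    finally show ?thesis .
  qed
  then show ?thesis unfolding NN_def using sub pQ up_Qp[OF pQ(1) assms(3)] by auto
qed

lemma NN_g1:
  assumes "\<nu> \<in> NN (up i k)" "p \<in># \<nu>" "i \<le> d" "length k = d + 1" "fst p ! i \<noteq> 0" "fst p \<noteq> ei d i"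
  shows "add_mset (dn i (fst p), snd p) (\<nu> - {#p#}) \<in> NN k"
proof -
  have pQ: "fst p \<in> Qp" "snd p \<in> E0" using assms(1,2) unfolding NN_def by auto
  have sub: "set_mset (\<nu> - {#p#}) \<subseteq> Qp \<times> E0" using assms(1) unfolding NN_def by (auto dest: in_diffD)
  have l: "length (fst p) = d + 1" using pQ Qp_len by blast
  have "wt (add_mset (dn i (fst p), snd p) (\<nu> - {#p#})) j = k ! j" if j: "j \<le> d" for j
  proof -
    have "wt (add_mset (dn i (fst p), snd p) (\<nu> - {#p#})) j = dn i (fst p) ! j + (wt \<nu> j - fst p ! j)"
      by (simp add: wt_diff[OF assms(2)])
    also have "\<dots> = k ! j"
      using wt_ge[OF assms(2), of j] assms(1,5) j l assms(4) unfolding NN_def by (auto simp: up_nth dn_nth)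
    finally show ?thesis .
  qed
  then show ?thesis unfolding NN_def using sub pQ dn_Qp[OF pQ(1) assms(3,5,6)] by auto
qed

lemma NN_f2:
  assumes "\<nu> \<in> NN k" "u \<in> E0" "i \<le> d" "length k = d + 1"
  shows "add_mset (ei d i, u) \<nu> \<in> NN (up i k)"
  using assms ei_Qp[OF assms(3)] unfolding NN_def by (auto simp: ei_nth up_nth)

lemma NN_g2:
  assumes "\<nu> \<in> NN (up i k)" "p \<in># \<nu>" "i \<le> d" "length k = d + 1" "fst p = ei d i"
  shows "\<nu> - {#p#} \<in> NN k"
proof -
  have sub: "set_mset (\<nu> - {#p#}) \<subseteq> Qp \<times> E0" using assms(1) unfolding NN_def by (auto dest: in_diffD)
  have "wt (\<nu> - {#p#}) j = k ! j" if j: "j \<le> d" for j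
    using wt_diff[OF assms(2), of j] assms(1,5) j assms(4) unfolding NN_def by (auto simp: up_nth ei_nth)
  then show ?thesis unfolding NN_def using sub by auto
qed

lemma G_swap: "p \<in># \<nu> \<Longrightarrow> G (add_mset (q, snd p) (\<nu> - {#p#})) = G \<nu>"
proof -
  assume p: "p \<in># \<nu>"
  have "image_mset snd \<nu> = image_mset snd (add_mset p (\<nu> - {#p#}))" using p by simp
  then show ?thesis unfolding G_def by simp
qed

lemma T1:
  assumes "\<nu> \<in> NN k" "p \<in># \<nu>" "i \<le> d"
  shows "x (shift_i i (shp p)) * (1 / vfact (fst p)) * Cf (\<nu> - {#p#}) x * G \<nu> \<alpha> x =
    (let z = (add_mset (up i (fst p), snd p) (\<nu> - {#p#}), (up i (fst p), snd p)) in
      real (count (fst z) (snd z)) * real (fst (snd z) ! i) * Cf (fst z) x * G (fst z) \<alpha> x)"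
proof -
  have pQ: "fst p \<in> Qp" "snd p \<in> E0" using assms(1,2) unfolding NN_def by auto
  have l: "length (fst p) = d + 1" using pQ Qp_len by blast
  have lu: "length (snd (snd p)) = d + 1" using pQ E0_len by blast
  define p1 where "p1 = (up i (fst p), snd p)"
  define \<nu>1 where "\<nu>1 = add_mset p1 (\<nu> - {#p#})"
  have c: "Cf \<nu>1 x * count \<nu>1 p1 = Cf (\<nu> - {#p#}) x * x (shp p1) / vfact (up i (fst p))"
    unfolding \<nu>1_def using C_add[of p1 "\<nu> - {#p#}" x] unfolding p1_def by simp
  have sh: "shp p1 = shift_i i (shp p)"
    unfolding p1_def shp_def using shift_i_q[of "snd p" "fst p" i] l lu assms(3) by simp
  have vf: "vfact (up i (fst p)) = real (fst p ! i + 1) * vfact (fst p)"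
    using vfact_up[of i "fst p"] l assms(3) by simp
  have fi: "fst p1 ! i = fst p ! i + 1" unfolding p1_def using l assms(3) by (simp add: up_nth)
  have g: "G \<nu>1 = G \<nu>" unfolding \<nu>1_def p1_def using G_swap[OF assms(2)] .
  have pos: "vfact (fst p) > 0" "real (fst p ! i + 1) > 0" using vfact_pos by auto
  have "real (count \<nu>1 p1) * real (fst p1 ! i) * Cf \<nu>1 x * G \<nu>1 \<alpha> x =
      real (fst p ! i + 1) * (Cf \<nu>1 x * count \<nu>1 p1) * G \<nu> \<alpha> x"
    using fi g by (simp add: ac_simps)
  also have "\<dots> = x (shift_i i (shp p)) * (1 / vfact (fst p)) * Cf (\<nu> - {#p#}) x * G \<nu> \<alpha> x"
    unfolding c sh vf using pos(2) by (intro aux_cancel) simp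
  finally show ?thesis unfolding Let_def p1_def \<nu>1_def by simp
qed

lemma T2:
  assumes "u \<in> E0" "i \<le> d"
  shows "Cf \<nu> x * x (shift_i i u) * TD u (G \<nu>) \<alpha> x =
    (let z = (add_mset (ei d i, u) \<nu>, (ei d i, u)) in
      real (count (fst z) (snd z)) * real (fst (snd z) ! i) * Cf (fst z) x * G (fst z) \<alpha> x)"
proof -
  have c: "Cf (add_mset (ei d i, u) \<nu>) x * count (add_mset (ei d i, u) \<nu>) (ei d i, u) =
      Cf \<nu> x * x (shp (ei d i, u)) / vfact (fst (ei d i, u))"
    by (rule C_add)
  have sh: "shp (ei d i, u) = shift_i i u"
    unfolding shp_def using shift_q_ei[OF E0_len[OF assms(1)] assms(2)] by simp
  have g: "TD u (G \<nu>) = G (add_mset (ei d i, u) \<nu>)"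
    unfolding G_def using DD_add[OF GFh] by simp
  have fi: "ei d i ! i = 1" using assms(2) by (simp add: ei_nth)
  show ?thesis unfolding Let_def using c sh g fi by (simp add: vfact_ei ac_simps)
qed

lemma step:
  assumes i: "i \<le> d" and k: "length k = d + 1"
  shows "tdi Ep ks l i (R k) \<alpha> x = R (up i k) \<alpha> x"
proof -
  define \<Phi> where "\<Phi> = (\<lambda>z::(nat list \<times> 'l idx) multiset \<times> (nat list \<times> 'l idx).
     real (count (fst z) (snd z)) * real (fst (snd z) ! i) * Cf (fst z) x * G (fst z) \<alpha> x)"
  define f1 where "f1 = (\<lambda>z::(nat list \<times> 'l idx) multiset \<times> (nat list \<times> 'l idx).
     (add_mset (up i (fst (snd z)), snd (snd z)) (fst z - {#snd z#}), (up i (fst (snd z)), snd (snd z))))"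
  define g1 where "g1 = (\<lambda>z::(nat list \<times> 'l idx) multiset \<times> (nat list \<times> 'l idx).
     (add_mset (dn i (fst (snd z)), snd (snd z)) (fst z - {#snd z#}), (dn i (fst (snd z)), snd (snd z))))"
  define f2 where "f2 = (\<lambda>z::(nat list \<times> 'l idx) multiset \<times> 'l idx.
     (add_mset (ei d i, snd z) (fst z), (ei d i, snd z)))"
  define g2 where "g2 = (\<lambda>z::(nat list \<times> 'l idx) multiset \<times> (nat list \<times> 'l idx).
     (fst z - {#snd z#}, snd (snd z)))"
  let ?N = "NN k" and ?N' = "NN (up i k)"
  let ?S = "Sigma ?N set_mset" and ?S' = "Sigma ?N' set_mset"
  define B1 where "B1 = {z \<in> ?S'. fst (snd z) ! i \<noteq> 0 \<and> fst (snd z) \<noteq> ei d i}"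
  define B2 where "B2 = {z \<in> ?S'. fst (snd z) = ei d i}"
  define B0 where "B0 = {z \<in> ?S'. fst (snd z) ! i = 0}"
  have k': "length (up i k) = d + 1" using k by simp
  have finN: "finite ?N" and finN': "finite ?N'" using finite_NN k k' by blast+
  have finS: "finite ?S" "finite ?S'" using finN finN' by (auto intro!: finite_SigmaI)
  have ik: "i < length k" using i k by simp
  define T where "T = S0 \<union> Ep l \<union> shp ` (\<Union>\<nu>\<in>?N. set_mset \<nu>)"
  have finT: "finite T" unfolding T_def using finN finE0 S0E0 EpE0 finite_subset
    by (intro finite_UnI finite_imageI finite_UN_I) auto
  have sub: "S0 \<union> shp ` set_mset \<nu> \<union> Ep l \<subseteq> T" if "\<nu> \<in> ?N" for \<nu>
    unfolding T_def using that by auto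
  have Rts: "R k = ts (\<lambda>\<nu>. cm (\<lambda>x. vfact k * Cf \<nu> x) (G \<nu>)) ?N"
    unfolding R_def ts_def cm_def by (simp add: sum_distrib_left ac_simps)
  have GTt: "GT T (cm (\<lambda>x. vfact k * Cf \<nu> x) (G \<nu>))" if "\<nu> \<in> ?N" for \<nu>
  proof -
    have "GT (({} \<union> shp ` set_mset \<nu>) \<union> S0) (cm (\<lambda>x. vfact k * Cf \<nu> x) (G \<nu>))"
      by (intro GT_cm GT_G Sm_mult Sm_const Sm_Cf dep_mult dep_const dep_Cf)
    then show ?thesis by (rule GT_mono) (use sub[OF that] in auto)
  qed
  have "tdi Ep ks l i (R k) \<alpha> x = (\<Sum>\<nu>\<in>?N. tdi Ep ks l i (cm (\<lambda>x. vfact k * Cf \<nu> x) (G \<nu>)) \<alpha> x)"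
    unfolding Rts by (rule tdi_ts[OF finN GTt finT]) (auto simp: T_def)
  also have "\<dots> = (\<Sum>\<nu>\<in>?N. vfact k * ((\<Sum>p\<in>set_mset \<nu>. x (shift_i i (shp p)) * (1 / vfact (fst p)) * Cf (\<nu> - {#p#}) x) * G \<nu> \<alpha> x)
      + vfact k * (Cf \<nu> x * (\<Sum>u\<in>E0. x (shift_i i u) * TD u (G \<nu>) \<alpha> x)))"
    by (intro sum.cong refl, subst tdi_term[OF GT_G finT sub finE0]) (use S0E0 EpE0 in \<open>auto simp: ac_simps\<close>)
  also have "\<dots> = (\<Sum>\<nu>\<in>?N. vfact k * (\<Sum>p\<in>set_mset \<nu>. \<Phi> (f1 (\<nu>, p))) + vfact k * (\<Sum>u\<in>E0. \<Phi> (f2 (\<nu>, u))))"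
  proof (intro sum.cong refl arg_cong2[where f="(+)"] arg_cong2[where f="(*)"])
    fix \<nu> assume \<nu>: "\<nu> \<in> ?N"
    show "(\<Sum>p\<in>set_mset \<nu>. x (shift_i i (shp p)) * (1 / vfact (fst p)) * Cf (\<nu> - {#p#}) x) * G \<nu> \<alpha> x =
        (\<Sum>p\<in>set_mset \<nu>. \<Phi> (f1 (\<nu>, p)))"
      unfolding sum_distrib_right
      by (intro sum.cong refl) (use T1[OF \<nu> _ i] in \<open>auto simp: \<Phi>_def f1_def Let_def\<close>)
    show "Cf \<nu> x * (\<Sum>u\<in>E0. x (shift_i i u) * TD u (G \<nu>) \<alpha> x) = (\<Sum>u\<in>E0. \<Phi> (f2 (\<nu>, u)))"
      unfolding sum_distrib_left
      by (intro sum.cong refl) (use T2[OF _ i] in \<open>auto simp: \<Phi>_def f2_def Let_def ac_simps\<close>)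
  qed
  also have "\<dots> = vfact k * ((\<Sum>z\<in>?S. \<Phi> (f1 z)) + (\<Sum>z\<in>?N \<times> E0. \<Phi> (f2 z)))"
    by (simp add: sum.distrib sum_distrib_left[symmetric] distrib_left sum.Sigma[OF finN] sum.cartesian_product finE0)
  also have "(\<Sum>z\<in>?S. \<Phi> (f1 z)) = (\<Sum>z\<in>B1. \<Phi> z)"
  proof (rule sum.reindex_bij_witness[where i=g1 and j=f1])
    fix z assume z: "z \<in> ?S"
    then obtain \<nu> p where zz: "z = (\<nu>, p)" "\<nu> \<in> ?N" "p \<in># \<nu>" by auto
    have pQ: "fst p \<in> Qp" using zz unfolding NN_def by auto
    show "g1 (f1 z) = z" unfolding zz f1_def g1_def using zz(3) by (simp add: dn_up)
    show "f1 z \<in> B1"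
    proof -
      have il: "i < length (fst p)" using Qp_len[OF pQ] i by simp
      show ?thesis unfolding zz f1_def B1_def
        using NN_f1[OF zz(2,3) i k] up_ne_ei[OF pQ i] il by (simp add: up_nth)
    qed
  next
    fix w assume w: "w \<in> B1"
    then obtain \<nu> p where ww: "w = (\<nu>, p)" "\<nu> \<in> ?N'" "p \<in># \<nu>" "fst p ! i \<noteq> 0" "fst p \<noteq> ei d i"
      unfolding B1_def by auto
    show "f1 (g1 w) = w" unfolding ww f1_def g1_def using ww(3,4) by (simp add: up_dn)
    show "g1 w \<in> ?S" unfolding ww g1_def using NN_g1[OF ww(2,3) i k ww(4,5)] by simp
  qed simp
  also have "(\<Sum>z\<in>?N \<times> E0. \<Phi> (f2 z)) = (\<Sum>z\<in>B2. \<Phi> z)"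
  proof (rule sum.reindex_bij_witness[where i=g2 and j=f2])
    fix z assume z: "z \<in> ?N \<times> E0"
    then obtain \<nu> u where zz: "z = (\<nu>, u)" "\<nu> \<in> ?N" "u \<in> E0" by auto
    show "g2 (f2 z) = z" unfolding zz f2_def g2_def by simp
    show "f2 z \<in> B2" unfolding zz f2_def B2_def using NN_f2[OF zz(2,3) i k] by simp
  next
    fix w assume w: "w \<in> B2"
    then obtain \<nu> p where ww: "w = (\<nu>, p)" "\<nu> \<in> ?N'" "p \<in># \<nu>" "fst p = ei d i"
      unfolding B2_def by auto
    have "snd p \<in> E0" using ww unfolding NN_def by auto
    then show "g2 w \<in> ?N \<times> E0" unfolding ww g2_def using NN_g2[OF ww(2,3) i k ww(4)] by simp
    show "f2 (g2 w) = w" unfolding ww f2_def g2_def using ww(3,4)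
      by (metis insert_DiffM prod.collapse fst_conv snd_conv)
  qed simp
  finally have LHS: "tdi Ep ks l i (R k) \<alpha> x = vfact k * ((\<Sum>z\<in>B1. \<Phi> z) + (\<Sum>z\<in>B2. \<Phi> z))" .
  have "R (up i k) \<alpha> x = vfact k * (\<Sum>\<nu>\<in>?N'. \<Sum>p\<in>set_mset \<nu>. \<Phi> (\<nu>, p))"
  proof -
    have "R (up i k) \<alpha> x = vfact k * (\<Sum>\<nu>\<in>?N'. real (k ! i + 1) * (Cf \<nu> x * G \<nu> \<alpha> x))"
      unfolding R_def vfact_up[OF ik] by (simp add: sum_distrib_left ac_simps)
    also have "\<dots> = vfact k * (\<Sum>\<nu>\<in>?N'. \<Sum>p\<in>set_mset \<nu>. \<Phi> (\<nu>, p))"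
    proof (intro arg_cong[where f="(*) (vfact k)"] sum.cong refl)
      fix \<nu> assume \<nu>: "\<nu> \<in> ?N'"
      have "real (k ! i + 1) = real (wt \<nu> i)" using \<nu> i ik unfolding NN_def by (simp add: up_nth)
      also have "\<dots> = (\<Sum>p\<in>#\<nu>. real (fst p ! i))" unfolding wt_def by (simp add: of_nat_sum_mset multiset.map_comp comp_def)
      also have "\<dots> = (\<Sum>p\<in>set_mset \<nu>. real (count \<nu> p) * real (fst p ! i))" by (rule sum_mset_count)
      finally show "real (k ! i + 1) * (Cf \<nu> x * G \<nu> \<alpha> x) = (\<Sum>p\<in>set_mset \<nu>. \<Phi> (\<nu>, p))"
        unfolding \<Phi>_def by (simp add: sum_distrib_right sum_distrib_left ac_simps)
    qed
    finally show ?thesis .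
  qed
  also have "(\<Sum>\<nu>\<in>?N'. \<Sum>p\<in>set_mset \<nu>. \<Phi> (\<nu>, p)) = (\<Sum>z\<in>?S'. \<Phi> z)"
    using sum.Sigma[OF finN', of set_mset "\<lambda>\<nu> p. \<Phi> (\<nu>, p)"] by (simp add: case_prod_beta')
  also have "\<dots> = (\<Sum>z\<in>B0. \<Phi> z) + ((\<Sum>z\<in>B1. \<Phi> z) + (\<Sum>z\<in>B2. \<Phi> z))"
  proof -
    have eq: "?S' = B0 \<union> (B1 \<union> B2)" unfolding B0_def B1_def B2_def by auto
    have d1: "B1 \<inter> B2 = {}" unfolding B1_def B2_def by auto
    have d0: "B0 \<inter> (B1 \<union> B2) = {}" unfolding B0_def B1_def B2_def using i by (auto simp: ei_nth)
    have f: "finite B0" "finite B1" "finite B2" unfolding B0_def B1_def B2_def using finS by auto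
    show ?thesis unfolding eq using f d0 d1 by (simp add: sum.union_disjoint)
  qed
  also have "(\<Sum>z\<in>B0. \<Phi> z) = 0" unfolding B0_def \<Phi>_def by (intro sum.neutral) auto
  finally show ?thesis using LHS by simp
qed

end

context MS
begin

lemma pow_step:
  assumes i: "i \<le> d" and k: "length k0 = d + 1"
  shows "(tdi Ep ks l i ^^ n) (R k0) = R (k0[i := k0 ! i + n])"
proof (induction n)
  case 0
  then show ?case by simp
next
  case (Suc n)
  let ?k = "k0[i := k0 ! i + n]"
  have lk: "length ?k = d + 1" using k by simp
  have "(tdi Ep ks l i ^^ Suc n) (R k0) = tdi Ep ks l i (R ?k)" using Suc by simp
  also have "\<dots> = R (up i ?k)" using step[OF i lk] by (intro ext) simp
  also have "up i ?k = k0[i := k0 ! i + Suc n]" unfolding up_def using i k by simp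
  finally show ?case .
qed

lemma tdk_R:
  assumes k: "length k = d + 1"
  shows "tdk Ep ks l k Fh = R k"
proof -
  define zz where "zz = (\<lambda>j. map (\<lambda>t. if t < j then 0 else k ! t) [0..<d + 1])"
  let ?F = "\<lambda>i G. (tdi Ep ks l i ^^ (k ! i)) \<circ> G"
  have main: "foldr ?F [d + 1 - m..<d + 1] id (R (replicate (d + 1) 0)) = R (zz (d + 1 - m))"
    if "m \<le> d + 1" for m
    using that
  proof (induction m)
    case 0
    have "zz (d + 1) = replicate (d + 1) 0" unfolding zz_def
      by (intro nth_equalityI) (auto simp del: replicate.simps upt.simps)
    then show ?case by simp
  next
    case (Suc m)
    define j where "j = d - m"
    have j: "d + 1 - Suc m = j" "d + 1 - m = j + 1" "j \<le> d" using Suc.prems unfolding j_def by auto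
    have up: "[j..<d + 1] = j # [j + 1..<d + 1]" using j(3) by (simp add: upt_conv_Cons)
    have lz: "length (zz (j + 1)) = d + 1" unfolding zz_def by simp
    have z0: "zz (j + 1) ! j = 0" unfolding zz_def using j(3) by (simp del: upt.simps)
    have IH: "foldr ?F [j + 1..<d + 1] id (R (replicate (d + 1) 0)) = R (zz (j + 1))"
      using Suc.IH[OF Suc_leD[OF Suc.prems]] unfolding j(2) .
    have "foldr ?F [d + 1 - Suc m..<d + 1] id (R (replicate (d + 1) 0))
        = (tdi Ep ks l j ^^ (k ! j)) (R (zz (j + 1)))"
      unfolding j(1) up by (simp only: foldr_Cons comp_apply IH)
    also have "\<dots> = R ((zz (j + 1))[j := zz (j + 1) ! j + k ! j])"
      by (rule pow_step[OF j(3) lz])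
    also have "(zz (j + 1))[j := zz (j + 1) ! j + k ! j] = zz j"
      unfolding z0 unfolding zz_def by (intro nth_equalityI) (auto simp: nth_list_update simp del: upt.simps)
    finally show ?case unfolding j .
  qed
  have "zz 0 = k" unfolding zz_def using k by (intro nth_equalityI) (auto simp del: upt.simps)
  then show ?thesis
    using main[of "d + 1"] k unfolding tdk_def R0 by simp
qed

end

lemma lexless_iff: "length p = length q \<Longrightarrow> lexless p q \<longleftrightarrow> p < q"
  unfolding lexless_def list_less_def lexord_take_index_conv by auto

lemma lexless_irrefl: "\<not> lexless p p"
  unfolding lexless_def by auto

lemma lexless_zero:
  assumes "length q = n" "q \<noteq> replicate n 0"
  shows "lexless (replicate n 0) q"
proof -
  have ex: "\<exists>j. j < n \<and> q ! j \<noteq> 0"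
  proof (rule ccontr)
    assume "\<not> (\<exists>j. j < n \<and> q ! j \<noteq> 0)"
    then have "q = replicate n 0" using assms(1) by (intro nth_equalityI) auto
    then show False using assms(2) by simp
  qed
  define j where "j = (LEAST j. j < n \<and> q ! j \<noteq> 0)"
  have j: "j < n" "q ! j \<noteq> 0" using LeastI_ex[OF ex] unfolding j_def by auto
  have lt: "q ! t = 0" if "t < j" for t
    using not_less_Least[of t "\<lambda>j. j < n \<and> q ! j \<noteq> 0"] that j(1) unfolding j_def by auto
  have "take j (replicate n 0) = take j q"
    using j(1) assms(1) lt by (intro nth_equalityI) auto
  then show ?thesis unfolding lexless_def using j assms(1) by auto
qed

definition mm :: "nat list \<Rightarrow> 'l mon \<Rightarrow> (nat list \<times> 'l idx) multiset" where
  "mm q m = Abs_multiset (\<lambda>p. if fst p = q then m (snd p) else 0)"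

lemma count_mm:
  assumes "finite {u. m u \<noteq> 0}"
  shows "count (mm q m) = (\<lambda>p. if fst p = q then m (snd p) else 0)"
  unfolding mm_def
proof (rule count_Abs_multiset)
  have sub: "{p. 0 < (if fst p = q then m (snd p) else 0)} \<subseteq> {q} \<times> {u. m u \<noteq> 0}" by auto
  have fin: "finite ({q} \<times> {u. m u \<noteq> 0})" using assms by simp
  show "finite {p. 0 < (if fst p = q then m (snd p) else 0)}"
    by (rule finite_subset[OF sub fin])
qed

lemma set_mm:
  assumes "finite {u. m u \<noteq> 0}"
  shows "set_mset (mm q m) = {q} \<times> {u. m u \<noteq> 0}"
  using count_mm[OF assms, of q] by (auto simp: set_mset_def)

definition toN :: "nat list list \<times> 'l mon list \<Rightarrow> (nat list \<times> 'l idx) multiset" where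
  "toN z = (\<Sum>i<length (fst z). mm (fst z ! i) (snd z ! i))"

definition toI :: "(nat list \<times> 'l idx) multiset \<Rightarrow> nat list list \<times> 'l mon list" where
  "toI \<nu> = (sorted_list_of_set (fst ` set_mset \<nu>),
            map (\<lambda>q u. count \<nu> (q, u)) (sorted_list_of_set (fst ` set_mset \<nu>)))"

lemma count_toN:
  assumes "\<forall>i<length qs. finite {u. (ms ! i) u \<noteq> 0}"
  shows "count (toN (qs, ms)) p = (\<Sum>i<length qs. if qs ! i = fst p then (ms ! i) (snd p) else 0)"
  unfolding toN_def using assms by (auto simp: count_sum count_mm intro!: sum.cong)

lemma delta_nth:
  assumes "distinct qs" "j < length qs"
  shows "(\<Sum>i<length qs. if qs ! i = qs ! j then f i else 0) = (f j :: 'a :: comm_monoid_add)"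
proof -
  have "(\<Sum>i<length qs. if qs ! i = qs ! j then f i else 0) = (\<Sum>i<length qs. if i = j then f i else 0)"
    using assms by (intro sum.cong refl) (auto simp: nth_eq_iff_index_eq)
  also have "\<dots> = f j" using assms(2) by simp
  finally show ?thesis .
qed

lemma delta_nth0:
  assumes "q \<notin> set qs"
  shows "(\<Sum>i<length qs. if qs ! i = q then f i else 0) = (0 :: 'a :: comm_monoid_add)"
  using assms by (intro sum.neutral) (auto simp: in_set_conv_nth)

lemma sum_mset_sum_over: "finite I \<Longrightarrow> (\<Sum>p\<in>#(\<Sum>i\<in>I. M i). f p) = (\<Sum>i\<in>I. \<Sum>p\<in>#M i. (f p :: 'b :: comm_monoid_add))"
  by (induction I rule: finite_induct) auto

lemma msize_eq: "finite {u. m u \<noteq> 0} \<Longrightarrow> msize m = (\<Sum>u\<in>{u. m u \<noteq> 0}. m u)"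
  unfolding msize_def by (simp add: Sum_any.expand_set)

lemma sum_single_prod: "(\<Sum>p\<in>{q} \<times> U. h p) = (\<Sum>u\<in>U. (h (q, u) :: 'b :: comm_monoid_add))"
  by (rule sum.reindex_bij_witness[of _ "\<lambda>u. (q, u)" "\<lambda>p. snd p"]) auto

lemma wt_mm:
  assumes "finite {u. m u \<noteq> 0}"
  shows "wt (mm q m) j = msize m * q ! j"
proof -
  have "wt (mm q m) j = (\<Sum>p\<in>set_mset (mm q m). of_nat (count (mm q m) p) * fst p ! j)"
    unfolding wt_def by (rule sum_mset_count)
  also have "\<dots> = (\<Sum>p\<in>{q} \<times> {u. m u \<noteq> 0}. m (snd p) * q ! j)"
    unfolding set_mm[OF assms] count_mm[OF assms] by (intro sum.cong) auto
  also have "\<dots> = (\<Sum>u\<in>{u. m u \<noteq> 0}. m u * q ! j)"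
    using sum_single_prod[where q=q and U="{u. m u \<noteq> 0}" and h="\<lambda>p. m (snd p) * q ! j"] by simp
  also have "\<dots> = msize m * q ! j" by (simp add: msize_eq[OF assms] sum_distrib_right)
  finally show ?thesis .
qed

lemma wt_toN:
  assumes "\<forall>i<length qs. finite {u. (ms ! i) u \<noteq> 0}"
  shows "wt (toN (qs, ms)) j = (\<Sum>i<length qs. msize (ms ! i) * qs ! i ! j)"
proof -
  have "wt (toN (qs, ms)) j = (\<Sum>i<length qs. wt (mm (qs ! i) (ms ! i)) j)"
    unfolding wt_def toN_def fst_conv snd_conv by (rule sum_mset_sum_over) simp
  also have "\<dots> = (\<Sum>i<length qs. msize (ms ! i) * qs ! i ! j)"
    using assms by (intro sum.cong refl wt_mm) auto
  finally show ?thesis .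
qed

context MS
begin

definition I0 :: "nat list \<Rightarrow> (nat list list \<times> 'l mon list) set" where
  "I0 k = {z \<in> Iset d k. \<forall>m\<in>set (snd z). {e. m e \<noteq> 0} \<subseteq> E0}"

lemma toI_parts:
  fixes \<nu> :: "(nat list \<times> 'l idx) multiset"
  defines "qs \<equiv> sorted_list_of_set (fst ` set_mset \<nu>)"
  shows "toI \<nu> = (qs, map (\<lambda>q u. count \<nu> (q, u)) qs)" "distinct qs" "set qs = fst ` set_mset \<nu>"
    "\<forall>i<length qs. finite {u. (map (\<lambda>q u. count \<nu> (q, u)) qs ! i) u \<noteq> 0}"
proof -
  show "toI \<nu> = (qs, map (\<lambda>q u. count \<nu> (q, u)) qs)" unfolding toI_def qs_def by simp
  show "distinct qs" unfolding qs_def by simp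
  show "set qs = fst ` set_mset \<nu>" unfolding qs_def by simp
  show "\<forall>i<length qs. finite {u. (map (\<lambda>q u. count \<nu> (q, u)) qs ! i) u \<noteq> 0}"
  proof (intro allI impI)
    fix i assume "i < length qs"
    then have "{u. (map (\<lambda>q u. count \<nu> (q, u)) qs ! i) u \<noteq> 0} \<subseteq> snd ` set_mset \<nu>"
    proof (intro subsetI)
      fix u assume "i < length qs" "u \<in> {u. (map (\<lambda>q u. count \<nu> (q, u)) qs ! i) u \<noteq> 0}"
      then have "(qs ! i, u) \<in># \<nu>" by (simp add: count_eq_zero_iff[symmetric])
      then show "u \<in> snd ` set_mset \<nu>" by (rule image_eqI[rotated]) simp
    qed
    then show "finite {u. (map (\<lambda>q u. count \<nu> (q, u)) qs ! i) u \<noteq> 0}"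
      by (rule finite_subset) simp
  qed
qed

lemma toN_toI: "toN (toI (\<nu> :: (nat list \<times> 'l idx) multiset)) = \<nu>"
proof -
  define qs where "qs = sorted_list_of_set (fst ` set_mset \<nu>)"
  note P = toI_parts[of \<nu>, folded qs_def]
  show ?thesis
  proof (rule multiset_eqI)
    fix p
    have c: "count (toN (toI \<nu>)) p = (\<Sum>i<length qs. if qs ! i = fst p then count \<nu> (qs ! i, snd p) else 0)"
      unfolding P(1) using count_toN[OF P(4), of p] by (auto intro!: sum.cong)
    show "count (toN (toI \<nu>)) p = count \<nu> p"
    proof (cases "fst p \<in> set qs")
      case True
      then obtain j where j: "j < length qs" "qs ! j = fst p" by (auto simp: in_set_conv_nth)
      show ?thesis unfolding c using delta_nth[OF P(2) j(1), of "\<lambda>i. count \<nu> (qs ! i, snd p)"] j by simp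
    next
      case False
      then have "p \<notin># \<nu>" using P(3) by force
      then show ?thesis unfolding c using delta_nth0[OF False] by (simp add: not_in_iff)
    qed
  qed
qed

lemma sorted_lex:
  assumes "\<forall>q\<in>set qs. length q = n"
  shows "sorted_wrt lexless qs \<longleftrightarrow> sorted_wrt (<) qs"
proof
  assume "sorted_wrt lexless qs"
  then show "sorted_wrt (<) qs" by (rule sorted_wrt_mono_rel[rotated]) (use assms lexless_iff in auto)
next
  assume "sorted_wrt (<) qs"
  then show "sorted_wrt lexless qs" by (rule sorted_wrt_mono_rel[rotated]) (use assms lexless_iff in auto)
qed

lemma toI_in:
  assumes \<nu>: "\<nu> \<in> NN k"
  shows "toI \<nu> \<in> I0 k"
proof -
  define qs where "qs = sorted_list_of_set (fst ` set_mset \<nu>)"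
  define ms where "ms = map (\<lambda>q u. count \<nu> (q, u)) qs"
  note P = toI_parts[of \<nu>, folded qs_def, folded ms_def]
  have sub: "set_mset \<nu> \<subseteq> Qp \<times> E0" and w: "\<forall>j\<le>d. wt \<nu> j = k ! j" using \<nu> unfolding NN_def by auto
  have qQ: "q \<in> Qp" if "q \<in> set qs" for q using that P(3) sub by auto
  have c1: "\<forall>q\<in>set qs. length q = d + 1 \<and> lexless (replicate (d + 1) 0) q"
  proof
    fix q assume "q \<in> set qs"
    then have "q \<in> Qp" by (rule qQ)
    then have "length q = d + 1" "q \<noteq> replicate (d + 1) 0" unfolding Qp_def mem_Collect_eq by blast+
    then show "length q = d + 1 \<and> lexless (replicate (d + 1) 0) q" using lexless_zero by blast
  qed
  have c2: "sorted_wrt lexless qs"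
    using sorted_lex[of qs "d + 1"] c1 strict_sorted_list_of_set unfolding qs_def by auto
  have c3: "finite {e. m e \<noteq> 0} \<and> {e. m e \<noteq> 0} \<subseteq> Eset d \<and> m \<noteq> (\<lambda>_. 0) \<and> {e. m e \<noteq> 0} \<subseteq> E0"
    if "m \<in> set ms" for m
  proof -
    obtain i where i: "i < length qs" "m = ms ! i" using \<open>m \<in> set ms\<close> unfolding ms_def by (auto simp: in_set_conv_nth)
    have m: "m = (\<lambda>u. count \<nu> (qs ! i, u))" using i unfolding ms_def by simp
    have fin: "finite {e. m e \<noteq> 0}" using P(4) i by simp
    have sE: "{e. m e \<noteq> 0} \<subseteq> E0" using sub unfolding m by (auto simp: count_eq_zero_iff[symmetric])
    have "qs ! i \<in> fst ` set_mset \<nu>" using P(3) i by (metis nth_mem)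
    then obtain u where "(qs ! i, u) \<in># \<nu>" by force
    then have "m u \<noteq> 0" unfolding m by simp
    then have "m \<noteq> (\<lambda>_. 0)" by auto
    then show ?thesis using fin sE E0E by auto
  qed
  have c4: "(\<Sum>i<length qs. msize (ms ! i) * qs ! i ! j) = k ! j" if "j \<le> d" for j
  proof -
    have fin: "\<forall>i<length qs. finite {u. (ms ! i) u \<noteq> 0}" using P(4) .
    have "(\<Sum>i<length qs. msize (ms ! i) * qs ! i ! j) = wt (toN (qs, ms)) j" using wt_toN[OF fin] by simp
    also have "toN (qs, ms) = \<nu>" using toN_toI[of \<nu>] P(1) by simp
    finally show ?thesis using w that by simp
  qed
  have "(qs, ms) \<in> Iset d k" unfolding Iset_def using c1 c2 c3 c4 unfolding ms_def by auto
  then show ?thesis unfolding I0_def using P(1) c3 by auto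
qed

lemma I0_facts:
  assumes z: "(qs, ms) \<in> I0 k"
  shows "length qs = length ms" "distinct qs" "sorted_wrt (<) qs"
    "\<forall>q\<in>set qs. length q = d + 1 \<and> q \<noteq> replicate (d + 1) 0"
    "\<forall>i<length qs. finite {u. (ms ! i) u \<noteq> 0}"
    "\<forall>i<length qs. {u. (ms ! i) u \<noteq> 0} \<subseteq> E0"
    "\<forall>i<length qs. ms ! i \<noteq> (\<lambda>_. 0)"
    "\<forall>j\<le>d. (\<Sum>i<length qs. msize (ms ! i) * qs ! i ! j) = k ! j"
proof -
  have I: "(qs, ms) \<in> Iset d k" and E: "\<forall>m\<in>set ms. {e. m e \<noteq> 0} \<subseteq> E0" using z unfolding I0_def by auto
  show l: "length qs = length ms" using I unfolding Iset_def by auto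
  have q: "\<forall>q\<in>set qs. length q = d + 1 \<and> lexless (replicate (d + 1) 0) q" using I unfolding Iset_def by auto
  then show "\<forall>q\<in>set qs. length q = d + 1 \<and> q \<noteq> replicate (d + 1) 0" using lexless_irrefl by blast
  have "sorted_wrt lexless qs" using I unfolding Iset_def by auto
  then show s: "sorted_wrt (<) qs" using sorted_lex[of qs "d + 1"] q by auto
  then show "distinct qs" using strict_sorted_iff by blast
  have m: "\<forall>m\<in>set ms. finite {e. m e \<noteq> 0} \<and> m \<noteq> (\<lambda>_. 0)" using I unfolding Iset_def by auto
  have mi: "ms ! i \<in> set ms" if "i < length qs" for i using l that by simp
  show "\<forall>i<length qs. finite {u. (ms ! i) u \<noteq> 0}" using m mi by blast
  show "\<forall>i<length qs. ms ! i \<noteq> (\<lambda>_. 0)" using m mi by blast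
  show "\<forall>i<length qs. {u. (ms ! i) u \<noteq> 0} \<subseteq> E0" using E mi by blast
  show "\<forall>j\<le>d. (\<Sum>i<length qs. msize (ms ! i) * qs ! i ! j) = k ! j" using I unfolding Iset_def by auto
qed

lemma count_toN_nth:
  assumes "(qs, ms) \<in> I0 k" "j < length qs"
  shows "count (toN (qs, ms)) (qs ! j, u) = (ms ! j) u"
proof -
  have "count (toN (qs, ms)) (qs ! j, u) = (\<Sum>i<length qs. if qs ! i = qs ! j then (ms ! i) u else 0)"
    using count_toN[OF I0_facts(5)[OF assms(1)], of "(qs ! j, u)"] by (auto intro!: sum.cong)
  also have "\<dots> = (ms ! j) u" by (rule delta_nth[OF I0_facts(2)[OF assms(1)] assms(2)])
  finally show ?thesis .
qed

lemma in_toN: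
  assumes "(qs, ms) \<in> I0 k" "p \<in># toN (qs, ms)"
  shows "\<exists>j<length qs. qs ! j = fst p \<and> (ms ! j) (snd p) \<noteq> 0"
proof (rule ccontr)
  assume H: "\<not> ?thesis"
  have "count (toN (qs, ms)) p = (\<Sum>i<length qs. if qs ! i = fst p then (ms ! i) (snd p) else 0)"
    by (rule count_toN[OF I0_facts(5)[OF assms(1)]])
  also have "\<dots> = 0" using H by (intro sum.neutral) auto
  finally show False using assms(2) not_in_iff by metis
qed

lemma toI_toN:
  assumes z: "(qs, ms) \<in> I0 k"
  shows "toI (toN (qs, ms)) = (qs, ms)"
proof -
  note F = I0_facts[OF z]
  let ?\<nu> = "toN (qs, ms)"
  have S: "fst ` set_mset ?\<nu> = set qs"
  proof
    show "fst ` set_mset ?\<nu> \<subseteq> set qs"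
    proof
      fix q assume "q \<in> fst ` set_mset ?\<nu>"
      then obtain p where p: "p \<in># ?\<nu>" "q = fst p" by blast
      obtain j where "j < length qs" "qs ! j = fst p" using in_toN[OF z p(1)] by blast
      then show "q \<in> set qs" using p(2) nth_mem by metis
    qed
    show "set qs \<subseteq> fst ` set_mset ?\<nu>"
    proof
      fix q assume "q \<in> set qs"
      then obtain j where j: "j < length qs" "q = qs ! j" by (auto simp: in_set_conv_nth)
      obtain u where u: "(ms ! j) u \<noteq> 0" using F(7) j by (metis (full_types) ext)
      have "0 < count ?\<nu> (qs ! j, u)" using count_toN_nth[OF z j(1), of u] u by simp
      then have "(qs ! j, u) \<in># ?\<nu>" by (simp only: count_greater_zero_iff)
      then show "q \<in> fst ` set_mset ?\<nu>" using j by force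
    qed
  qed
  have sl: "sorted_list_of_set (set qs) = qs"
    by (rule strict_sorted_equal[OF F(3) strict_sorted_list_of_set]) simp
  have ms: "map (\<lambda>q u. count ?\<nu> (q, u)) qs = ms"
  proof (rule nth_equalityI)
    show "length (map (\<lambda>q u. count ?\<nu> (q, u)) qs) = length ms" using F(1) by simp
    fix j assume "j < length (map (\<lambda>q u. count ?\<nu> (q, u)) qs)"
    then have j: "j < length qs" by simp
    show "map (\<lambda>q u. count ?\<nu> (q, u)) qs ! j = ms ! j"
      using j count_toN_nth[OF z j] by (simp add: fun_eq_iff)
  qed
  show ?thesis unfolding toI_def S sl ms by simp
qed

lemma toN_in:
  assumes z: "(qs, ms) \<in> I0 k"
  shows "toN (qs, ms) \<in> NN k"
proof -
  note F = I0_facts[OF z]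
  have "set_mset (toN (qs, ms)) \<subseteq> Qp \<times> E0"
  proof
    fix p assume "p \<in># toN (qs, ms)"
    then obtain j where j: "j < length qs" "qs ! j = fst p" "(ms ! j) (snd p) \<noteq> 0" using in_toN[OF z] by blast
    have "qs ! j \<in> set qs" using j(1) by (rule nth_mem)
    then have "length (qs ! j) = d + 1 \<and> qs ! j \<noteq> replicate (d + 1) 0" using F(4) by blast
    then have "fst p \<in> Qp" unfolding Qp_def using j(2) by simp
    moreover have "snd p \<in> E0" using F(6) j by blast
    ultimately show "p \<in> Qp \<times> E0" by (simp add: mem_Times_iff)
  qed
  moreover have "\<forall>j\<le>d. wt (toN (qs, ms)) j = k ! j"
    using wt_toN[OF F(5)] F(8) by simp
  ultimately show ?thesis unfolding NN_def by blast
qed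

lemma I0_eq: "I0 k = toI ` NN k"
proof
  show "I0 k \<subseteq> toI ` NN k"
  proof
    fix z assume z: "z \<in> I0 k"
    obtain qs ms where zz: "z = (qs, ms)" by fastforce
    have a: "toI (toN (qs, ms)) = (qs, ms)" by (rule toI_toN[OF z[unfolded zz]])
    have b: "toN (qs, ms) \<in> NN k" by (rule toN_in[OF z[unfolded zz]])
    show "z \<in> toI ` NN k" unfolding zz using a b by (rule image_eqI[OF sym])
  qed
  show "toI ` NN k \<subseteq> I0 k"
  proof
    fix z assume "z \<in> toI ` NN k"
    then obtain \<nu> where "\<nu> \<in> NN k" "z = toI \<nu>" by blast
    then show "z \<in> I0 k" using toI_in by simp
  qed
qed

end

context MS
begin

lemma coef_toI: "coef (fst (toI \<nu>)) (snd (toI \<nu>)) x = Cf (\<nu> :: (nat list \<times> 'l idx) multiset) x"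
proof -
  define qs where "qs = sorted_list_of_set (fst ` set_mset \<nu>)"
  note P = toI_parts[of \<nu>, folded qs_def]
  define H where "H = (\<lambda>q. \<Prod>e\<in>{e. count \<nu> (q, e) \<noteq> 0}. gfac (count \<nu> (q, e)) (q, e) x)"
  have "coef (fst (toI \<nu>)) (snd (toI \<nu>)) x = (\<Prod>i<length qs. H (qs ! i))"
    unfolding P(1) coef_def H_def gfac_def shp_def by simp
  also have "\<dots> = (\<Prod>q\<in>set qs. H q)"
  proof -
    have inj: "inj_on (nth qs) {..<length qs}" using P(2) by (intro inj_on_nth) auto
    have im: "nth qs ` {..<length qs} = set qs" by (auto simp: in_set_conv_nth)
    show ?thesis using prod.reindex[OF inj, of H] unfolding im by simp
  qed
  also have "\<dots> = (\<Prod>p\<in>Sigma (set qs) (\<lambda>q. {e. count \<nu> (q, e) \<noteq> 0}). gfac (count \<nu> p) p x)"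
  proof -
    have fin: "\<forall>q\<in>set qs. finite {e. count \<nu> (q, e) \<noteq> 0}"
    proof
      fix q
      have "{e. count \<nu> (q, e) \<noteq> 0} \<subseteq> snd ` set_mset \<nu>"
        by (auto simp: count_eq_zero_iff[symmetric] intro: image_eqI[rotated])
      then show "finite {e. count \<nu> (q, e) \<noteq> 0}" by (rule finite_subset) simp
    qed
    have "(\<Prod>q\<in>set qs. H q) = (\<Prod>(q, e)\<in>Sigma (set qs) (\<lambda>q. {e. count \<nu> (q, e) \<noteq> 0}). gfac (count \<nu> (q, e)) (q, e) x)"
      unfolding H_def by (rule prod.Sigma[OF finite_set fin])
    also have "(\<lambda>(q, e). gfac (count \<nu> (q, e)) (q, e) x) = (\<lambda>p. gfac (count \<nu> p) p x)" by auto
    finally show ?thesis .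
  qed
  also have "Sigma (set qs) (\<lambda>q. {e. count \<nu> (q, e) \<noteq> 0}) = set_mset \<nu>"
    unfolding P(3) by (force simp: count_eq_zero_iff[symmetric])
  finally show ?thesis unfolding Cf_def .
qed

lemma msum_toI: "msum (snd (toI \<nu>)) = count (image_mset snd (\<nu> :: (nat list \<times> 'l idx) multiset))"
proof
  fix u
  define qs where "qs = sorted_list_of_set (fst ` set_mset \<nu>)"
  note P = toI_parts[of \<nu>, folded qs_def]
  have "msum (snd (toI \<nu>)) u = (\<Sum>q\<in>set qs. count \<nu> (q, u))"
    unfolding P(1) msum_def by (simp add: comp_def sum_list_distinct_conv_sum_set[OF P(2)])
  also have "\<dots> = (\<Sum>p\<in>(\<lambda>q. (q, u)) ` set qs. count \<nu> p)"
    by (rule sum.reindex[symmetric, unfolded comp_def]) (auto simp: inj_on_def)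
  also have "\<dots> = (\<Sum>p\<in>snd -` {u} \<inter> set_mset \<nu>. count \<nu> p)"
  proof (rule sum.mono_neutral_right)
    show "finite ((\<lambda>q. (q, u)) ` set qs)" by simp
    show "snd -` {u} \<inter> set_mset \<nu> \<subseteq> (\<lambda>q. (q, u)) ` set qs"
      unfolding P(3) by (force intro: image_eqI[rotated])
    show "\<forall>p\<in>(\<lambda>q. (q, u)) ` set qs - snd -` {u} \<inter> set_mset \<nu>. count \<nu> p = 0"
      by (auto simp: not_in_iff)
  qed
  also have "\<dots> = count (image_mset snd \<nu>) u" by (simp add: count_image_mset)
  finally show "msum (snd (toI \<nu>)) u = count (image_mset snd \<nu>) u" .
qed

lemma tDm_toI: "tDm Ep ks l (msum (snd (toI \<nu>))) Fh = G (\<nu> :: (nat list \<times> 'l idx) multiset)"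
proof -
  have fin: "finite {e. msum (snd (toI \<nu>)) e \<noteq> 0}"
    unfolding msum_toI by (simp add: count_eq_zero_iff[symmetric])
  have fin': "finite {e. count (image_mset snd \<nu>) e \<noteq> 0}"
    by (simp add: count_eq_zero_iff[symmetric])
  have "tDm Ep ks l (msum (snd (toI \<nu>))) Fh = tDm Ep ks l (count (image_mset snd \<nu>)) Fh"
    by (simp only: msum_toI)
  also have "\<dots> = DD (Abs_multiset (count (image_mset snd \<nu>))) Fh" by (rule tDm_DD[OF GFh fin'])
  finally show ?thesis unfolding G_def count_inverse .
qed

lemma Iset_out:
  assumes "(qs, ms) \<in> Iset d k" "(qs, ms) \<notin> I0 k"
  shows "tDm Ep ks l (msum ms) Fh = (\<lambda>\<alpha> x. 0)"
proof -
  obtain m e where me: "m \<in> set ms" "m e \<noteq> 0" "e \<notin> E0" using assms unfolding I0_def by auto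
  have finm: "\<forall>m\<in>set ms. finite {e. m e \<noteq> 0}" using assms(1) unfolding Iset_def by auto
  have "{e. msum ms e \<noteq> 0} \<subseteq> (\<Union>m\<in>set ms. {e. m e \<noteq> 0})"
    unfolding msum_def by (auto simp: sum_list_eq_0_iff)
  then have fin: "finite {e. msum ms e \<noteq> 0}" by (rule finite_subset) (use finm in auto)
  have "m e \<le> msum ms e" unfolding msum_def by (rule member_le_sum_list) (use me(1) in auto)
  then have "0 < count (Abs_multiset (msum ms)) e"
    using me(2) count_Abs_multiset[of "msum ms"] fin by (simp add: not_less_zero)
  then have e: "e \<in># Abs_multiset (msum ms)" by simp
  show ?thesis unfolding tDm_DD[OF GFh fin]
    by (rule DD_out[OF GFh e]) (use me(3) S0E0 EpE0 in auto)
qed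

lemma R_Iset:
  assumes k: "length k = d + 1"
  shows "R k \<alpha> x = vfact k * Sum_any (\<lambda>(qs, ms). if (qs, ms) \<in> Iset d k
              then coef qs ms x * tDm Ep ks l (msum ms) Fh \<alpha> x else 0)"
proof -
  define h where "h = (\<lambda>z. coef (fst z) (snd z) x * tDm Ep ks l (msum (snd z)) Fh \<alpha> x)"
  have finI0: "finite (I0 k)" unfolding I0_eq using finite_NN[OF k] by simp
  have "Sum_any (\<lambda>(qs, ms). if (qs, ms) \<in> Iset d k then coef qs ms x * tDm Ep ks l (msum ms) Fh \<alpha> x else 0)
      = (\<Sum>z\<in>I0 k. (\<lambda>(qs, ms). if (qs, ms) \<in> Iset d k then coef qs ms x * tDm Ep ks l (msum ms) Fh \<alpha> x else 0) z)"
  proof (rule Sum_any.expand_superset[OF finI0])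
    show "{a. (case a of (qs, ms) \<Rightarrow> if (qs, ms) \<in> Iset d k then coef qs ms x * tDm Ep ks l (msum ms) Fh \<alpha> x else 0) \<noteq> 0} \<subseteq> I0 k"
    proof
      fix z assume z: "z \<in> {a. (case a of (qs, ms) \<Rightarrow> if (qs, ms) \<in> Iset d k then coef qs ms x * tDm Ep ks l (msum ms) Fh \<alpha> x else 0) \<noteq> 0}"
      obtain qs ms where zz: "z = (qs, ms)" by fastforce
      show "z \<in> I0 k"
      proof (rule ccontr)
        assume "z \<notin> I0 k"
        then show False using z Iset_out[of qs ms k] unfolding zz by (auto split: if_splits)
      qed
    qed
  qed
  also have "\<dots> = (\<Sum>z\<in>I0 k. h z)"
    unfolding h_def by (intro sum.cong refl) (auto simp: I0_def)
  also have "\<dots> = (\<Sum>\<nu>\<in>NN k. Cf \<nu> x * G \<nu> \<alpha> x)"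
  proof -
    have "(\<Sum>\<nu>\<in>NN k. Cf \<nu> x * G \<nu> \<alpha> x) = (\<Sum>z\<in>I0 k. h z)"
    proof (rule sum.reindex_bij_witness[where i=toN and j=toI])
      fix \<nu> assume "\<nu> \<in> NN k"
      show "toN (toI \<nu>) = \<nu>" by (rule toN_toI)
      show "toI \<nu> \<in> I0 k" using toI_in \<open>\<nu> \<in> NN k\<close> .
      show "h (toI \<nu>) = Cf \<nu> x * G \<nu> \<alpha> x" unfolding h_def coef_toI tDm_toI ..
    next
      fix z assume z: "z \<in> I0 k"
      obtain qs ms where zz: "z = (qs, ms)" by fastforce
      show "toI (toN z) = z" unfolding zz by (rule toI_toN[OF z[unfolded zz]])
      show "toN z \<in> NN k" unfolding zz by (rule toN_in[OF z[unfolded zz]])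
    qed
    then show ?thesis by simp
  qed
  finally show ?thesis unfolding R_def by simp
qed

end

lemma smooth_Sm: "smooth_fin d F \<Longrightarrow> Sm F"
  unfolding smooth_fin_def Sm_def PP_def pdiff_def by blast

lemma smooth_dep: "smooth_fin d F \<Longrightarrow> \<exists>S. finite S \<and> S \<subseteq> Eset d \<and> dep S F"
  unfolding smooth_fin_def dep_def by blast

theorem lemma3p5:
  fixes d ks :: nat and Ep :: "'l::finite \<Rightarrow> ('l \<times> nat list) set" and l :: 'l
    and k :: "nat list" and Fh :: "('l \<times> nat list \<Rightarrow> nat) \<Rightarrow> ('l \<times> nat list \<Rightarrow> real) \<Rightarrow> real"
  assumes "1 \<le> d"
    and "\<forall>l'. finite (Ep l') \<and> Ep l' \<subseteq> Eset d"
    and "length k = d + 1"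
    and "in_tens d Ep ks l Fh"
  shows "tdk Ep ks l k Fh =
    (\<lambda>\<alpha> x. vfact k * Sum_any (\<lambda>(qs, ms). if (qs, ms) \<in> Iset d k
              then coef qs ms x * tDm Ep ks l (msum ms) Fh \<alpha> x else 0))"
proof -
  interpret TS Ep ks l .
  have finEp: "finite (Ep l)" and EpE: "Ep l \<subseteq> Eset d" using assms(2) by auto
  define Vs where "Vs = {\<alpha>. valid_mon Ep ks l \<alpha>}"
  have finV: "finite Vs"
  proof -
    have "Vs \<subseteq> {f. \<forall>x. (x \<in> Ep l \<longrightarrow> f x \<in> {0..ks}) \<and> (x \<notin> Ep l \<longrightarrow> f x = 0)}"
      unfolding Vs_def valid_mon_def by auto
    moreover have "finite {f. \<forall>x. (x \<in> Ep l \<longrightarrow> f x \<in> {0..ks}) \<and> (x \<notin> Ep l \<longrightarrow> f x = (0::nat))}"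
      by (rule finite_set_of_finite_funs[OF finEp]) simp
    ultimately show ?thesis by (rule finite_subset)
  qed
  have sm: "smooth_fin d (Fh \<alpha>)" if "\<alpha> \<in> Vs" for \<alpha>
    using assms(4) that unfolding in_tens_def Vs_def by blast
  have zero: "Fh \<alpha> = (\<lambda>_. 0)" if "\<alpha> \<notin> Vs" for \<alpha>
    using assms(4) that unfolding in_tens_def Vs_def by blast
  define Sa where "Sa = (\<lambda>\<alpha>. SOME S. finite S \<and> S \<subseteq> Eset d \<and> dep S (Fh \<alpha>))"
  have Sa: "finite (Sa \<alpha>) \<and> Sa \<alpha> \<subseteq> Eset d \<and> dep (Sa \<alpha>) (Fh \<alpha>)" if "\<alpha> \<in> Vs" for \<alpha>
    unfolding Sa_def by (rule someI_ex) (rule smooth_dep[OF sm[OF that]])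
  define S0 where "S0 = (\<Union>\<alpha>\<in>Vs. Sa \<alpha>)"
  define E0 where "E0 = S0 \<union> Ep l"
  have finS0: "finite S0" unfolding S0_def using finV Sa by blast
  have S0E: "S0 \<subseteq> Eset d" unfolding S0_def using Sa by blast
  have GFh: "GT S0 Fh"
    unfolding GT_def
  proof (intro conjI allI impI)
    fix \<alpha>
    show "\<not> valid_mon Ep ks l \<alpha> \<Longrightarrow> Fh \<alpha> = (\<lambda>_. 0)" using zero unfolding Vs_def by blast
    show "Sm (Fh \<alpha>)"
      by (cases "\<alpha> \<in> Vs") (auto simp: zero Sm_const intro: smooth_Sm[OF sm])
    show "dep S0 (Fh \<alpha>)"
    proof (cases "\<alpha> \<in> Vs")
      case True
      then show ?thesis using Sa[OF True] dep_mono unfolding S0_def by blast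
    next
      case False
      then show ?thesis using zero[OF False] dep_const by simp
    qed
  qed
  interpret MS Ep ks l d E0 S0 Fh
  proof
    show "finite E0" unfolding E0_def using finS0 finEp by simp
    show "S0 \<subseteq> E0" "Ep l \<subseteq> E0" unfolding E0_def by auto
    show "E0 \<subseteq> Eset d" unfolding E0_def using S0E EpE by auto
    show "GT S0 Fh" by (rule GFh)
  qed
  show ?thesis
    unfolding tdk_R[OF assms(3)] using R_Iset[OF assms(3)] by (intro ext) simp
qed

end
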